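(* Let $\varphi$ be an analytic self-map of $\mathbb{D}$ and $n$ a positive integer, and suppose $D_{\varphi,n}$ is a bounded operator on $H^2$. Then $D_{\varphi,n}$ is a Hilbert–Schmidt operator on $H^2$ if and only if \[ \lim_{r\to1}\frac{1}{2\pi}\int_0^{2\pi}\frac{d\theta}{\big(1-|\varphi(re^{i\theta})|^2\big)^{2n+1}}<\infty. \]
   Context: $\mathbb{D}$ is the open unit disk in $\mathbb{C}$ and $H^2$ is the Hardy space of analytic functions $f$ on $\mathbb{D}$ with $\|f\|^2=\lim_{r\to1}\frac{1}{2\pi}\int_0^{2\pi}|f(re^{i\theta})|^2\,d\theta<\infty$. For an analytic self-map $\varphi$ of $\mathbb{D}$ and a positive integer $n$, $D_{\varphi,n}$ is the operator $D_{\varphi,n}f=f^{(n)}\circ\varphi$. A bounded operator $A$ on a separable Hilbert space is Hilbert–Schmidt if $\sum_{m}\|Ae_m\|^2<\infty$ for an (equivalently, every) orthonormal basis $\{e_m\}$. *)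

theory Defs
  imports "HOL-Complex_Analysis.Complex_Analysis"
begin

definition circ_mean :: "(complex \<Rightarrow> complex) \<Rightarrow> real \<Rightarrow> complex" where
  "circ_mean g r = integral {0..2*pi} (\<lambda>\<theta>. g (complex_of_real r * exp (\<i> * complex_of_real \<theta>))) / complex_of_real (2*pi)"

definition H2_mean :: "(complex \<Rightarrow> complex) \<Rightarrow> real \<Rightarrow> real" where
  "H2_mean f r = (1 / (2*pi)) * integral {0..2*pi} (\<lambda>\<theta>. (cmod (f (complex_of_real r * exp (\<i> * complex_of_real \<theta>))))\<^sup>2)"

definition in_H2 :: "(complex \<Rightarrow> complex) \<Rightarrow> bool" where
  "in_H2 f \<longleftrightarrow> f holomorphic_on ball 0 1 \<and> (\<exists>L. (H2_mean f \<longlongrightarrow> L) (at_left 1))"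

definition H2_norm :: "(complex \<Rightarrow> complex) \<Rightarrow> real" where
  "H2_norm f = sqrt (Lim (at_left 1) (H2_mean f))"

definition H2_inner :: "(complex \<Rightarrow> complex) \<Rightarrow> (complex \<Rightarrow> complex) \<Rightarrow> complex" where
  "H2_inner f g = Lim (at_left 1) (circ_mean (\<lambda>z. f z * cnj (g z)))"

text \<open>Orthonormal basis of H^2 (H^2 is separable and infinite dimensional, so indexed by nat).
  Completeness: the only element orthogonal to all basis vectors is zero (on the disc).\<close>
definition H2_ONB :: "(nat \<Rightarrow> complex \<Rightarrow> complex) \<Rightarrow> bool" where
  "H2_ONB e \<longleftrightarrow> (\<forall>m. in_H2 (e m)) \<and>
     (\<forall>j k. H2_inner (e j) (e k) = (if j = k then 1 else 0)) \<and>
     (\<forall>f. in_H2 f \<and> (\<forall>m. H2_inner f (e m) = 0) \<longrightarrow> (\<forall>z\<in>ball 0 1. f z = 0))"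

definition D_op :: "(complex \<Rightarrow> complex) \<Rightarrow> nat \<Rightarrow> (complex \<Rightarrow> complex) \<Rightarrow> (complex \<Rightarrow> complex)" where
  "D_op \<phi> n f = (\<lambda>z. (deriv ^^ n) f (\<phi> z))"

definition H2_bounded_op :: "((complex \<Rightarrow> complex) \<Rightarrow> (complex \<Rightarrow> complex)) \<Rightarrow> bool" where
  "H2_bounded_op A \<longleftrightarrow> (\<forall>f. in_H2 f \<longrightarrow> in_H2 (A f)) \<and>
     (\<exists>C. \<forall>f. in_H2 f \<longrightarrow> H2_norm (A f) \<le> C * H2_norm f)"

definition H2_Hilbert_Schmidt :: "((complex \<Rightarrow> complex) \<Rightarrow> (complex \<Rightarrow> complex)) \<Rightarrow> bool" where
  "H2_Hilbert_Schmidt A \<longleftrightarrow> H2_bounded_op A \<and>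
     (\<exists>e. H2_ONB e \<and> summable (\<lambda>m. (H2_norm (A (e m)))\<^sup>2))"

end

theory Submission
  imports Defs
begin

lemma int_exp:
  fixes m :: int
  shows "((\<lambda>\<theta>. exp (\<i> * of_int m * of_real \<theta>)) has_integral (if m = 0 then 2*pi else 0)) {0..2*pi}"
proof (cases "m = 0")
  case True
  then show ?thesis using has_integral_const_real[of "1::complex" 0 "2*pi"] by (simp add: scaleR_conv_of_real)
next
  case False
  define F where "F = (\<lambda>z::complex. exp (\<i> * of_int m * z) / (\<i> * of_int m))"
  have d: "((\<lambda>x. F (of_real x)) has_vector_derivative exp (\<i> * of_int m * of_real x)) (at x within {0..2*pi})" for x
  proof (rule has_vector_derivative_real_field)
    show "(F has_field_derivative exp (\<i> * of_int m * of_real x)) (at (of_real x))"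
      unfolding F_def using False by (auto intro!: derivative_eq_intros)
  qed
  have "((\<lambda>\<theta>. exp (\<i> * of_int m * of_real \<theta>)) has_integral (F (of_real (2*pi)) - F (of_real 0))) {0..2*pi}"
    by (rule fundamental_theorem_of_calculus) (use d in auto)
  moreover have "exp (\<i> * of_int m * of_real (2*pi)) = 1"
    using exp_integer_2pi[of "of_int m"] by (simp add: mult_ac)
  ultimately show ?thesis using False by (simp add: F_def)
qed

lemma int_series:
  fixes u :: "nat \<Rightarrow> real \<Rightarrow> 'a::banach"
  assumes c: "\<And>k. continuous_on {a..b} (u k)" and bd: "\<And>k x. x \<in> {a..b} \<Longrightarrow> norm (u k x) \<le> M k"
    and M: "summable M"
  shows "(\<lambda>k. integral {a..b} (u k)) sums integral {a..b} (\<lambda>x. \<Sum>k. u k x)"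
    and "(\<lambda>x. \<Sum>k. u k x) integrable_on {a..b}"
proof -
  have ul: "uniform_limit {a..b} (\<lambda>n x. \<Sum>i<n. u i x) (\<lambda>x. \<Sum>k. u k x) sequentially"
    by (rule Weierstrass_m_test[OF bd M])
  have cs: "continuous_on {a..b} (\<lambda>x. \<Sum>i<n. u i x)" for n
    by (intro continuous_intros c)
  obtain I J where I: "\<And>n. ((\<lambda>x. \<Sum>i<n. u i x) has_integral I n) {a..b}"
    and J: "((\<lambda>x. \<Sum>k. u k x) has_integral J) {a..b}" and IJ: "(I \<longlongrightarrow> J) sequentially"
    by (rule uniform_limit_integral[OF ul cs]) auto
  have "I n = (\<Sum>i<n. integral {a..b} (u i))" for n
  proof -
    have "((\<lambda>x. \<Sum>i<n. u i x) has_integral (\<Sum>i<n. integral {a..b} (u i))) {a..b}"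
      by (intro has_integral_sum) (auto intro: integrable_continuous_real c)
    then show ?thesis using I[of n] by (metis has_integral_unique)
  qed
  then have "I = (\<lambda>n. \<Sum>i<n. integral {a..b} (u i))" by auto
  then show "(\<lambda>k. integral {a..b} (u k)) sums integral {a..b} (\<lambda>x. \<Sum>k. u k x)"
    using IJ J unfolding sums_def by (simp add: integral_unique)
  show "(\<lambda>x. \<Sum>k. u k x) integrable_on {a..b}" using J by blast
qed

lemma abs_summable_ps:
  fixes c :: "nat \<Rightarrow> complex"
  assumes S: "\<And>z. z \<in> ball 0 1 \<Longrightarrow> summable (\<lambda>j. c j * z^j)" and r: "0 \<le> r" "r < 1"
  shows "summable (\<lambda>j. norm (c j) * r^j)"
proof -
  have "complex_of_real ((1+r)/2) \<in> ball 0 1" using r by (simp only: mem_ball_0 norm_of_real) auto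
  then have "summable (\<lambda>j. c j * (complex_of_real ((1+r)/2))^j)"
    using S by blast
  then have "summable (\<lambda>j. of_real (norm (c j)) * (complex_of_real r)^j)"
    by (rule power_series_conv_imp_absconv_weak) (use r in \<open>simp only: norm_of_real, simp\<close>)
  then have "summable (\<lambda>j. complex_of_real (norm (c j) * r^j))" by simp
  then show ?thesis using summable_of_real_iff by blast
qed

lemma exp_circ_pow:
  "(complex_of_real r * exp (\<i> * complex_of_real t))^j * exp (-(\<i> * of_nat k * complex_of_real t))
   = of_real (r^j) * exp (\<i> * of_int (int j - int k) * complex_of_real t)"
proof -
  have "exp (\<i> * complex_of_real t)^j = exp (of_nat j * (\<i> * complex_of_real t))"
    by (simp add: exp_of_nat_mult)
  then have "(complex_of_real r * exp (\<i> * complex_of_real t))^j * exp (-(\<i> * of_nat k * complex_of_real t))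
     = of_real (r^j) * (exp (of_nat j * (\<i> * complex_of_real t)) * exp (-(\<i> * of_nat k * complex_of_real t)))"
    by (simp add: power_mult_distrib)
  also have "exp (of_nat j * (\<i> * complex_of_real t)) * exp (-(\<i> * of_nat k * complex_of_real t))
     = exp (\<i> * of_int (int j - int k) * complex_of_real t)"
    by (simp add: exp_add[symmetric] algebra_simps)
  finally show ?thesis .
qed

lemma coef_integral:
  fixes c :: "nat \<Rightarrow> complex"
  assumes S: "\<And>z. z \<in> ball 0 1 \<Longrightarrow> (\<lambda>j. c j * z^j) sums F z" and r: "0 \<le> r" "r < 1"
  shows "((\<lambda>\<theta>. F (of_real r * exp(\<i> * of_real \<theta>)) * exp(-(\<i> * of_nat k * of_real \<theta>)))
           has_integral (2*pi*c k * r^k)) {0..2*pi}"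
proof -
  define u where "u j \<theta> = c j * of_real (r^j) * exp (\<i> * of_int (int j - int k) * complex_of_real \<theta>)" for j \<theta>
  have M: "summable (\<lambda>j. norm (c j) * r^j)"
    by (rule abs_summable_ps) (use S r in \<open>auto simp: sums_iff\<close>)
  have bd: "norm (u j \<theta>) \<le> norm (c j) * r^j" for j \<theta>
    using r by (simp add: u_def norm_mult norm_power abs_of_nonneg)
  have cont: "continuous_on {0..2*pi} (u j)" for j
    unfolding u_def by (intro continuous_intros)
  have ui: "integral {0..2*pi} (u j) = (if j = k then 2*pi*c k * r^k else 0)" for j
  proof -
    have "((\<lambda>\<theta>. exp (\<i> * of_int (int j - int k) * of_real \<theta>)) has_integral
          (if int j - int k = 0 then 2*pi else 0)) {0..2*pi}"
      by (rule int_exp)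
    then have "(u j has_integral (c j * of_real (r^j)) * (if int j - int k = 0 then 2*pi else 0)) {0..2*pi}"
      unfolding u_def by (rule has_integral_mult_right)
    then show ?thesis by (auto simp: integral_unique)
  qed
  have su: "(\<lambda>j. u j \<theta>) sums (F (of_real r * exp(\<i> * of_real \<theta>)) * exp(-(\<i> * of_nat k * of_real \<theta>)))" for \<theta>
  proof -
    have "of_real r * exp(\<i> * of_real \<theta>) \<in> ball (0::complex) 1"
      using r by (simp add: norm_mult)
    from sums_mult2[OF S[OF this], of "exp(-(\<i> * of_nat k * of_real \<theta>))"]
    have "(\<lambda>j. c j * ((of_real r * exp(\<i> * of_real \<theta>))^j * exp(-(\<i> * of_nat k * of_real \<theta>)))) sums
      (F (of_real r * exp(\<i> * of_real \<theta>)) * exp(-(\<i> * of_nat k * of_real \<theta>)))"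
      by (simp only: mult.assoc)
    moreover have "c j * ((of_real r * exp(\<i> * of_real \<theta>))^j * exp(-(\<i> * of_nat k * of_real \<theta>))) = u j \<theta>" for j
      unfolding u_def exp_circ_pow by (simp only: mult.assoc)
    ultimately show ?thesis by simp
  qed
  from int_series[where a=0 and b="2*pi", OF cont bd M]
  have A: "(\<lambda>j. integral {0..2*pi} (u j)) sums integral {0..2*pi} (\<lambda>x. \<Sum>j. u j x)"
    and B: "(\<lambda>x. \<Sum>j. u j x) integrable_on {0..2*pi}" by auto
  have E: "(\<lambda>x. \<Sum>j. u j x) = (\<lambda>\<theta>. F (of_real r * exp(\<i> * of_real \<theta>)) * exp(-(\<i> * of_nat k * of_real \<theta>)))"
    using su by (auto simp: sums_iff)
  have "(\<lambda>j. integral {0..2*pi} (u j)) sums (2*pi*c k * r^k)"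
    unfolding ui using sums_single[of k "\<lambda>_. 2*pi*c k * r^k"] by simp
  with A have II: "integral {0..2*pi} (\<lambda>x. \<Sum>j. u j x) = 2*pi*c k * r^k" using sums_unique2 by blast
  have "((\<lambda>x. \<Sum>j. u j x) has_integral (2*pi*c k * r^k)) {0..2*pi}"
    using integrable_integral[OF B] unfolding II .
  then show ?thesis unfolding E by (simp only: of_real_power)
qed

lemma circ_in_ball: "0 \<le> r \<Longrightarrow> r < 1 \<Longrightarrow> complex_of_real r * exp (\<i> * complex_of_real t) \<in> ball 0 1"
  by (simp add: norm_mult)

lemma circ_cont:
  assumes h: "f holomorphic_on ball 0 1" and r: "0 \<le> r" "r < 1"
  shows "continuous_on A (\<lambda>\<theta>. f (complex_of_real r * exp (\<i> * complex_of_real \<theta>)))"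
  by (rule continuous_on_compose2[OF holomorphic_on_imp_continuous_on[OF h]])
     (use r circ_in_ball in \<open>auto intro!: continuous_intros\<close>)

lemma circ_bounded:
  assumes c: "continuous_on {0..2*pi} (g :: real \<Rightarrow> 'a::real_normed_vector)"
  obtains B where "\<And>\<theta>. \<theta> \<in> {0..2*pi} \<Longrightarrow> norm (g \<theta>) \<le> B"
proof -
  have "compact (g ` {0..2*pi})" by (rule compact_continuous_image[OF c]) simp
  then have "bounded (g ` {0..2*pi})" by (rule compact_imp_bounded)
  then show ?thesis using that unfolding bounded_iff by blast
qed

lemma ps_unique:
  fixes c d :: "nat \<Rightarrow> complex"
  assumes "\<And>z. z \<in> ball 0 1 \<Longrightarrow> (\<lambda>j. c j * z^j) sums F z"
    and "\<And>z. z \<in> ball 0 1 \<Longrightarrow> (\<lambda>j. d j * z^j) sums F z"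
  shows "c = d"
proof
  fix k
  have "2*pi*c k * (complex_of_real (1/2))^k = 2*pi*d k * (complex_of_real (1/2))^k"
    by (rule has_integral_unique[OF coef_integral[where r="1/2", OF assms(1)] coef_integral[where r="1/2", OF assms(2)]]) auto
  then show "c k = d k" by simp
qed

definition cf :: "(complex \<Rightarrow> complex) \<Rightarrow> nat \<Rightarrow> complex" where
  "cf f k = (deriv ^^ k) f 0 / fact k"

lemma holo_ps:
  assumes "f holomorphic_on ball 0 1" "z \<in> ball 0 1"
  shows "(\<lambda>j. cf f j * z^j) sums f z"
  using holomorphic_power_series[OF assms] by (simp add: cf_def)

lemma ps_holo:
  assumes "\<And>z. z \<in> ball 0 1 \<Longrightarrow> (\<lambda>j. c j * z^j) sums F z"
  shows "F holomorphic_on ball 0 1"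
  by (rule power_series_holomorphic[where a=c]) (use assms in simp)

lemma cf_ps:
  assumes "\<And>z. z \<in> ball 0 1 \<Longrightarrow> (\<lambda>j. c j * z^j) sums F z"
  shows "cf F = c"
  by (rule ps_unique[OF holo_ps[OF ps_holo[OF assms]] assms])

lemma cnj_circ_pow:
  "cnj ((complex_of_real r * exp (\<i> * complex_of_real t))^k) = of_real (r^k) * exp (-(\<i> * of_nat k * complex_of_real t))"
proof -
  have "cnj ((complex_of_real r * exp (\<i> * complex_of_real t))^k) = of_real r ^ k * exp (-(\<i> * complex_of_real t))^k"
    by (simp add: exp_cnj power_mult_distrib)
  also have "exp (-(\<i> * complex_of_real t))^k = exp (of_nat k * (-(\<i> * complex_of_real t)))"
    by (rule exp_of_nat_mult[symmetric])
  finally show ?thesis by (simp add: mult_ac)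
qed

lemma circ_mean_ps:
  assumes f: "f holomorphic_on ball 0 1" and g: "g holomorphic_on ball 0 1" and r: "0 \<le> r" "r < 1"
  shows "(\<lambda>k. cf f k * cnj (cf g k) * of_real (r^(2*k))) sums circ_mean (\<lambda>z. f z * cnj (g z)) r"
proof -
  define F where "F \<theta> = f (complex_of_real r * exp (\<i> * complex_of_real \<theta>))" for \<theta>
  define u where "u k \<theta> = F \<theta> * (cnj (cf g k) * of_real (r^k) * exp (-(\<i> * of_nat k * complex_of_real \<theta>)))" for k \<theta>
  have cF: "continuous_on {0..2*pi} F" unfolding F_def by (rule circ_cont[OF f r])
  obtain B where B: "\<And>\<theta>. \<theta> \<in> {0..2*pi} \<Longrightarrow> norm (F \<theta>) \<le> B" using circ_bounded[OF cF] by blast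
  have sg: "summable (\<lambda>k. norm (cf g k) * r^k)"
    by (rule abs_summable_ps[OF _ r]) (use holo_ps[OF g] in \<open>auto simp: sums_iff\<close>)
  have M: "summable (\<lambda>k. B * (norm (cf g k) * r^k))" using sg by (rule summable_mult)
  have bd: "norm (u k \<theta>) \<le> B * (norm (cf g k) * r^k)" if "\<theta> \<in> {0..2*pi}" for k \<theta>
  proof -
    have "norm (u k \<theta>) = norm (F \<theta>) * (norm (cf g k) * r^k)"
      using r by (simp add: u_def norm_mult norm_power abs_of_nonneg)
    also have "\<dots> \<le> B * (norm (cf g k) * r^k)"
      by (rule mult_right_mono[OF B[OF that]]) (use r in simp)
    finally show ?thesis .
  qed
  have cu: "continuous_on {0..2*pi} (u k)" for k
    unfolding u_def by (intro continuous_intros cF)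
  from int_series[where a=0 and b="2*pi", OF cu bd M]
  have A: "(\<lambda>k. integral {0..2*pi} (u k)) sums integral {0..2*pi} (\<lambda>x. \<Sum>k. u k x)" by auto
  have E: "(\<lambda>x. \<Sum>k. u k x) = (\<lambda>\<theta>. f (complex_of_real r * exp (\<i> * complex_of_real \<theta>)) *
              cnj (g (complex_of_real r * exp (\<i> * complex_of_real \<theta>))))"
  proof
    fix \<theta>
    have "(\<lambda>k. cf g k * (complex_of_real r * exp (\<i> * complex_of_real \<theta>))^k) sums
           g (complex_of_real r * exp (\<i> * complex_of_real \<theta>))"
      by (rule holo_ps[OF g circ_in_ball[OF r]])
    then have "(\<lambda>k. cnj (cf g k * (complex_of_real r * exp (\<i> * complex_of_real \<theta>))^k)) sums
           cnj (g (complex_of_real r * exp (\<i> * complex_of_real \<theta>)))"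
      by (simp only: sums_cnj)
    then have "(\<lambda>k. F \<theta> * cnj (cf g k * (complex_of_real r * exp (\<i> * complex_of_real \<theta>))^k)) sums
           (F \<theta> * cnj (g (complex_of_real r * exp (\<i> * complex_of_real \<theta>))))"
      by (rule sums_mult)
    moreover have "F \<theta> * cnj (cf g k * (complex_of_real r * exp (\<i> * complex_of_real \<theta>))^k) = u k \<theta>" for k
      unfolding u_def complex_cnj_mult cnj_circ_pow by (simp only: mult.assoc)
    ultimately show "(\<Sum>k. u k \<theta>) = f (complex_of_real r * exp (\<i> * complex_of_real \<theta>)) *
              cnj (g (complex_of_real r * exp (\<i> * complex_of_real \<theta>)))"
      by (simp add: sums_iff F_def)
  qed
  have ui: "integral {0..2*pi} (u k) = cnj (cf g k) * of_real (r^k) * (2*pi*cf f k * complex_of_real r ^ k)" for k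
  proof -
    have "((\<lambda>\<theta>. f (of_real r * exp(\<i> * of_real \<theta>)) * exp(-(\<i> * of_nat k * of_real \<theta>)))
           has_integral (2*pi*cf f k * complex_of_real r ^ k)) {0..2*pi}"
      by (rule coef_integral[OF holo_ps[OF f] r])
    then have "((\<lambda>\<theta>. (cnj (cf g k) * of_real (r^k)) * (f (of_real r * exp(\<i> * of_real \<theta>)) * exp(-(\<i> * of_nat k * of_real \<theta>))))
           has_integral (cnj (cf g k) * of_real (r^k)) * (2*pi*cf f k * complex_of_real r ^ k)) {0..2*pi}"
      by (rule has_integral_mult_right)
    moreover have "(\<lambda>\<theta>. (cnj (cf g k) * of_real (r^k)) * (f (of_real r * exp(\<i> * of_real \<theta>)) * exp(-(\<i> * of_nat k * of_real \<theta>))))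
        = u k" by (auto simp: u_def F_def mult_ac)
    ultimately show ?thesis by (simp add: integral_unique)
  qed
  have "(\<lambda>k. integral {0..2*pi} (u k) / complex_of_real (2*pi)) sums
         (integral {0..2*pi} (\<lambda>x. \<Sum>k. u k x) / complex_of_real (2*pi))"
    by (rule sums_divide[OF A])
  moreover have "integral {0..2*pi} (u k) / complex_of_real (2*pi) = cf f k * cnj (cf g k) * of_real (r^(2*k))" for k
    unfolding ui by (simp add: power_mult_distrib power2_eq_square power_mult field_simps)
  ultimately show ?thesis unfolding circ_mean_def E by simp
qed

lemma circ_mean_sq:
  assumes f: "f holomorphic_on ball 0 1" and r: "0 \<le> r" "r < 1"
  shows "circ_mean (\<lambda>z. f z * cnj (f z)) r = complex_of_real (H2_mean f r)"
proof -
  define h where "h \<theta> = (cmod (f (complex_of_real r * exp (\<i> * complex_of_real \<theta>))))\<^sup>2" for \<theta>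
  have ch: "continuous_on {0..2*pi} h" unfolding h_def by (intro continuous_intros circ_cont[OF f r])
  have "(h has_integral integral {0..2*pi} h) {0..2*pi}"
    by (rule integrable_integral[OF integrable_continuous_real[OF ch]])
  from has_integral_of_real[OF this]
  have "((\<lambda>\<theta>. complex_of_real (h \<theta>)) has_integral complex_of_real (integral {0..2*pi} h)) {0..2*pi}" .
  moreover have "(\<lambda>\<theta>. complex_of_real (h \<theta>)) = (\<lambda>\<theta>. f (complex_of_real r * exp (\<i> * complex_of_real \<theta>)) *
      cnj (f (complex_of_real r * exp (\<i> * complex_of_real \<theta>))))"
    unfolding h_def complex_norm_square by simp
  ultimately have "integral {0..2*pi} (\<lambda>\<theta>. f (complex_of_real r * exp (\<i> * complex_of_real \<theta>)) *
      cnj (f (complex_of_real r * exp (\<i> * complex_of_real \<theta>)))) = complex_of_real (integral {0..2*pi} h)"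
    by (simp add: integral_unique)
  then show ?thesis unfolding circ_mean_def H2_mean_def h_def by simp
qed

lemma H2_mean_ps:
  assumes f: "f holomorphic_on ball 0 1" and r: "0 \<le> r" "r < 1"
  shows "(\<lambda>k. (cmod (cf f k))\<^sup>2 * r^(2*k)) sums H2_mean f r"
proof -
  have "(\<lambda>k. cf f k * cnj (cf f k) * of_real (r^(2*k))) sums complex_of_real (H2_mean f r)"
    using circ_mean_ps[OF f f r] circ_mean_sq[OF f r] by simp
  moreover have "cf f k * cnj (cf f k) * of_real (r^(2*k)) = complex_of_real ((cmod (cf f k))\<^sup>2 * r^(2*k))" for k
    by (simp only: of_real_mult complex_norm_square)
  ultimately show ?thesis by (simp only: sums_of_real_iff)
qed

lemma at_left_1_eventually: "eventually (\<lambda>r. 0 < r \<and> r < (1::real)) (at_left 1)"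
  by (rule eventually_mono[OF eventually_at_left_real[of 0 1]]) auto

lemma abel_lim:
  fixes a :: "nat \<Rightarrow> 'a::{banach, real_normed_field}"
  assumes s: "summable (\<lambda>k. norm (a k))"
  shows "((\<lambda>r. \<Sum>k. a k * of_real (r^(2*k))) \<longlongrightarrow> (\<Sum>k. a k)) (at_left 1)"
proof -
  define F where "F r = (\<Sum>k. a k * of_real (r^(2*k)))" for r :: real
  have bd: "norm (a k * of_real (r^(2*k))) \<le> norm (a k)" if "r \<in> {0..1}" for k r
  proof -
    have "\<bar>r^(2*k)\<bar> \<le> 1" using that by (auto simp: abs_of_nonneg power_le_one)
    then show ?thesis by (simp only: norm_mult norm_of_real) (rule mult_left_le[OF _ norm_ge_zero])
  qed
  have ul: "uniform_limit {0..1} (\<lambda>n r. \<Sum>k<n. a k * of_real (r^(2*k))) F sequentially"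
    unfolding F_def by (rule Weierstrass_m_test[OF bd s])
  have "continuous_on {0..1} F"
    by (rule uniform_limit_theorem[OF _ ul]) (auto intro!: always_eventually continuous_intros)
  then have "(F \<longlongrightarrow> F 1) (at 1 within {0..1})"
    by (simp add: continuous_on_def)
  then have "(F \<longlongrightarrow> F 1) (at 1 within {..<1})"
  proof (rule Lim_transform_within_set)
    have "eventually (\<lambda>x. x \<in> ball (1::real) 1) (at 1)"
      by (rule eventually_at_in_open') auto
    then show "eventually (\<lambda>x. x \<in> {0..1} \<longleftrightarrow> x \<in> {..<(1::real)}) (at 1)"
      unfolding eventually_at_filter by eventually_elim (auto simp: dist_real_def)
  qed
  then show ?thesis unfolding F_def by simp
qed

lemma in_H2_imp:
  assumes "in_H2 f"
  shows "f holomorphic_on ball 0 1" "summable (\<lambda>k. (cmod (cf f k))\<^sup>2)"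
    "(H2_mean f \<longlongrightarrow> (\<Sum>k. (cmod (cf f k))\<^sup>2)) (at_left 1)"
proof -
  show f: "f holomorphic_on ball 0 1" using assms by (simp add: in_H2_def)
  obtain L where L: "(H2_mean f \<longlongrightarrow> L) (at_left 1)" using assms by (auto simp: in_H2_def)
  have le: "(\<Sum>k<N. (cmod (cf f k))\<^sup>2) \<le> L" for N
  proof (rule tendsto_le[OF _ L])
    show "((\<lambda>r. \<Sum>k<N. (cmod (cf f k))\<^sup>2 * r^(2*k)) \<longlongrightarrow> (\<Sum>k<N. (cmod (cf f k))\<^sup>2)) (at_left 1)"
      by (rule tendsto_eq_intros refl)+ simp
    show "eventually (\<lambda>r. (\<Sum>k<N. (cmod (cf f k))\<^sup>2 * r^(2*k)) \<le> H2_mean f r) (at_left 1)"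
      using at_left_1_eventually
    proof eventually_elim
      case (elim r)
      then have "(\<lambda>k. (cmod (cf f k))\<^sup>2 * r^(2*k)) sums H2_mean f r" using H2_mean_ps[OF f] by auto
      then show ?case using elim sum_le_suminf[of "\<lambda>k. (cmod (cf f k))\<^sup>2 * r^(2*k)" "{..<N}"] by (auto simp: sums_iff)
    qed
  qed simp
  show s: "summable (\<lambda>k. (cmod (cf f k))\<^sup>2)"
    by (rule summableI_nonneg_bounded[OF _ le]) simp
  have "((\<lambda>r. \<Sum>k. (cmod (cf f k))\<^sup>2 * of_real (r^(2*k))) \<longlongrightarrow> (\<Sum>k. (cmod (cf f k))\<^sup>2)) (at_left 1)"
    by (rule abel_lim) (use s in simp)
  moreover have "eventually (\<lambda>r. (\<Sum>k. (cmod (cf f k))\<^sup>2 * of_real (r^(2*k))) = H2_mean f r) (at_left 1)"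
    using at_left_1_eventually
  proof eventually_elim
    case (elim r)
    then show ?case using H2_mean_ps[OF f, of r] by (simp add: sums_iff)
  qed
  ultimately show "(H2_mean f \<longlongrightarrow> (\<Sum>k. (cmod (cf f k))\<^sup>2)) (at_left 1)"
    by (rule Lim_transform_eventually)
qed

lemma in_H2_iff: "in_H2 f \<longleftrightarrow> f holomorphic_on ball 0 1 \<and> summable (\<lambda>k. (cmod (cf f k))\<^sup>2)"
proof
  assume "in_H2 f" then show "f holomorphic_on ball 0 1 \<and> summable (\<lambda>k. (cmod (cf f k))\<^sup>2)"
    using in_H2_imp by blast
next
  assume A: "f holomorphic_on ball 0 1 \<and> summable (\<lambda>k. (cmod (cf f k))\<^sup>2)"
  then have f: "f holomorphic_on ball 0 1" and s: "summable (\<lambda>k. (cmod (cf f k))\<^sup>2)" by auto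
  have "((\<lambda>r. \<Sum>k. (cmod (cf f k))\<^sup>2 * of_real (r^(2*k))) \<longlongrightarrow> (\<Sum>k. (cmod (cf f k))\<^sup>2)) (at_left 1)"
    by (rule abel_lim) (use s in simp)
  moreover have "eventually (\<lambda>r. (\<Sum>k. (cmod (cf f k))\<^sup>2 * of_real (r^(2*k))) = H2_mean f r) (at_left 1)"
    using at_left_1_eventually
  proof eventually_elim
    case (elim r)
    then show ?case using H2_mean_ps[OF f, of r] by (simp add: sums_iff)
  qed
  ultimately have "(H2_mean f \<longlongrightarrow> (\<Sum>k. (cmod (cf f k))\<^sup>2)) (at_left 1)"
    by (rule Lim_transform_eventually)
  then show "in_H2 f" using f by (auto simp: in_H2_def)
qed

lemma H2_norm_sq:
  assumes "in_H2 f"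
  shows "(H2_norm f)\<^sup>2 = (\<Sum>k. (cmod (cf f k))\<^sup>2)"
proof -
  have "Lim (at_left 1) (H2_mean f) = (\<Sum>k. (cmod (cf f k))\<^sup>2)"
    by (rule tendsto_Lim[OF _ in_H2_imp(3)[OF assms]]) simp
  moreover have "0 \<le> (\<Sum>k. (cmod (cf f k))\<^sup>2)"
    by (rule suminf_nonneg[OF in_H2_imp(2)[OF assms]]) simp
  ultimately show ?thesis by (simp add: H2_norm_def)
qed

lemma abs_prod_summable:
  assumes "summable (\<lambda>k. (cmod (a k))\<^sup>2)" "summable (\<lambda>k. (cmod (b k))\<^sup>2)"
  shows "summable (\<lambda>k. norm (a k * cnj (b k)))"
proof (rule summable_comparison_test'[where N=0])
  show "summable (\<lambda>k. ((cmod (a k))\<^sup>2 + (cmod (b k))\<^sup>2) / 2)"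
    using assms by (intro summable_divide summable_add)
  fix k
  have "2 * (cmod (a k) * cmod (b k)) \<le> (cmod (a k))\<^sup>2 + (cmod (b k))\<^sup>2"
    by (rule sum_squares_bound[simplified mult.assoc]) 
  then show "norm (norm (a k * cnj (b k))) \<le> ((cmod (a k))\<^sup>2 + (cmod (b k))\<^sup>2) / 2"
    by (simp add: norm_mult)
qed

lemma H2_inner_eq:
  assumes f: "in_H2 f" and g: "in_H2 g"
  shows "H2_inner f g = (\<Sum>k. cf f k * cnj (cf g k))"
proof -
  have hf: "f holomorphic_on ball 0 1" and hg: "g holomorphic_on ball 0 1"
    using f g by (auto simp: in_H2_def)
  have "((\<lambda>r. \<Sum>k. (cf f k * cnj (cf g k)) * of_real (r^(2*k))) \<longlongrightarrow> (\<Sum>k. cf f k * cnj (cf g k))) (at_left 1)"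
    by (rule abel_lim[OF abs_prod_summable[OF in_H2_imp(2)[OF f] in_H2_imp(2)[OF g]]])
  moreover have "eventually (\<lambda>r. (\<Sum>k. (cf f k * cnj (cf g k)) * of_real (r^(2*k))) = circ_mean (\<lambda>z. f z * cnj (g z)) r) (at_left 1)"
    using at_left_1_eventually
  proof eventually_elim
    case (elim r)
    then show ?case using circ_mean_ps[OF hf hg, of r] by (simp add: sums_iff)
  qed
  ultimately have "(circ_mean (\<lambda>z. f z * cnj (g z)) \<longlongrightarrow> (\<Sum>k. cf f k * cnj (cf g k))) (at_left 1)"
    by (rule Lim_transform_eventually)
  then show ?thesis unfolding H2_inner_def by (rule tendsto_Lim[rotated]) simp
qed

definition l2 :: "(nat \<Rightarrow> complex) \<Rightarrow> bool" where
  "l2 x \<longleftrightarrow> summable (\<lambda>j. (cmod (x j))\<^sup>2)"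
definition ip :: "(nat \<Rightarrow> complex) \<Rightarrow> (nat \<Rightarrow> complex) \<Rightarrow> complex" where
  "ip x y = (\<Sum>j. x j * cnj (y j))"
definition nsq :: "(nat \<Rightarrow> complex) \<Rightarrow> real" where
  "nsq x = (\<Sum>j. (cmod (x j))\<^sup>2)"

lemma l2_add: "l2 x \<Longrightarrow> l2 y \<Longrightarrow> l2 (\<lambda>j. x j + y j)"
  unfolding l2_def
proof (rule summable_comparison_test'[where N=0])
  assume "summable (\<lambda>j. (cmod (x j))\<^sup>2)" "summable (\<lambda>j. (cmod (y j))\<^sup>2)"
  then show "summable (\<lambda>j. 2 * (cmod (x j))\<^sup>2 + 2 * (cmod (y j))\<^sup>2)"
    by (intro summable_add summable_mult)
  fix j
  have "cmod (x j + y j) \<le> cmod (x j) + cmod (y j)" by (rule norm_triangle_ineq)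
  then have "(cmod (x j + y j))\<^sup>2 \<le> (cmod (x j) + cmod (y j))\<^sup>2" by (simp add: power_mono)
  also have "\<dots> \<le> 2 * (cmod (x j))\<^sup>2 + 2 * (cmod (y j))\<^sup>2"
  proof -
    have h: "0 \<le> (cmod (x j) - cmod (y j))\<^sup>2" by simp
    then show ?thesis unfolding power2_eq_square by (simp add: algebra_simps)
  qed
  finally show "norm ((cmod (x j + y j))\<^sup>2) \<le> 2 * (cmod (x j))\<^sup>2 + 2 * (cmod (y j))\<^sup>2" by simp
qed

lemma l2_scale: "l2 x \<Longrightarrow> l2 (\<lambda>j. c * x j)"
  unfolding l2_def by (simp add: norm_mult power_mult_distrib summable_mult)

lemma l2_neg: "l2 x \<Longrightarrow> l2 (\<lambda>j. - x j)"
  unfolding l2_def by simp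

lemma l2_diff: "l2 x \<Longrightarrow> l2 y \<Longrightarrow> l2 (\<lambda>j. x j - y j)"
  using l2_add[of x "\<lambda>j. - y j"] l2_neg[of y] by simp

lemma l2_zero: "l2 (\<lambda>j. 0)" unfolding l2_def by simp

lemma l2_sum: "finite A \<Longrightarrow> (\<And>m. m \<in> A \<Longrightarrow> l2 (x m)) \<Longrightarrow> l2 (\<lambda>j. \<Sum>m\<in>A. c m * x m j)"
proof (induction A rule: finite_induct)
  case empty then show ?case by (simp add: l2_zero)
next
  case (insert a A)
  then show ?case by (simp add: l2_add l2_scale)
qed

lemma ip_summable: "l2 x \<Longrightarrow> l2 y \<Longrightarrow> summable (\<lambda>j. x j * cnj (y j))"
  unfolding l2_def by (rule summable_norm_cancel[OF abs_prod_summable])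

lemma ip_add_left: "l2 x \<Longrightarrow> l2 y \<Longrightarrow> l2 z \<Longrightarrow> ip (\<lambda>j. x j + y j) z = ip x z + ip y z"
  unfolding ip_def by (simp add: distrib_right suminf_add ip_summable)

lemma ip_diff_left: "l2 x \<Longrightarrow> l2 y \<Longrightarrow> l2 z \<Longrightarrow> ip (\<lambda>j. x j - y j) z = ip x z - ip y z"
  unfolding ip_def by (simp add: left_diff_distrib suminf_diff ip_summable)

lemma ip_scale_left: "l2 x \<Longrightarrow> l2 z \<Longrightarrow> ip (\<lambda>j. c * x j) z = c * ip x z"
  unfolding ip_def by (simp add: mult.assoc suminf_mult ip_summable)

lemma ip_conj: "l2 x \<Longrightarrow> l2 y \<Longrightarrow> ip y x = cnj (ip x y)"
proof -
  assume "l2 x" "l2 y"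
  then have "(\<lambda>j. x j * cnj (y j)) sums ip x y" unfolding ip_def by (simp add: ip_summable summable_sums)
  then have "(\<lambda>j. cnj (x j * cnj (y j))) sums cnj (ip x y)" by (simp only: sums_cnj)
  then show ?thesis unfolding ip_def by (simp add: sums_iff mult.commute)
qed

lemma ip_sum_left:
  "finite A \<Longrightarrow> (\<And>m. m \<in> A \<Longrightarrow> l2 (x m)) \<Longrightarrow> l2 z \<Longrightarrow>
    ip (\<lambda>j. \<Sum>m\<in>A. c m * x m j) z = (\<Sum>m\<in>A. c m * ip (x m) z)"
proof (induction A rule: finite_induct)
  case empty then show ?case by (simp add: ip_def)
next
  case (insert a A)
  have "ip (\<lambda>j. \<Sum>m\<in>insert a A. c m * x m j) z = ip (\<lambda>j. c a * x a j + (\<Sum>m\<in>A. c m * x m j)) z"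
    using insert by simp
  also have "\<dots> = ip (\<lambda>j. c a * x a j) z + ip (\<lambda>j. \<Sum>m\<in>A. c m * x m j) z"
    by (rule ip_add_left) (use insert in \<open>auto intro: l2_scale l2_sum\<close>)
  also have "\<dots> = c a * ip (x a) z + (\<Sum>m\<in>A. c m * ip (x m) z)"
    using insert by (simp add: ip_scale_left)
  finally show ?case using insert by simp
qed

lemma ip_sum_right:
  assumes "finite A" "\<And>m. m \<in> A \<Longrightarrow> l2 (x m)" "l2 z"
  shows "ip z (\<lambda>j. \<Sum>m\<in>A. c m * x m j) = (\<Sum>m\<in>A. cnj (c m) * ip z (x m))"
proof -
  have "ip z (\<lambda>j. \<Sum>m\<in>A. c m * x m j) = cnj (ip (\<lambda>j. \<Sum>m\<in>A. c m * x m j) z)"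
    by (rule ip_conj) (use assms in \<open>auto intro: l2_sum\<close>)
  also have "\<dots> = cnj (\<Sum>m\<in>A. c m * ip (x m) z)" using ip_sum_left[OF assms] by simp
  also have "\<dots> = (\<Sum>m\<in>A. cnj (c m) * ip z (x m))"
  proof -
    have eq: "ip z (x m) = cnj (ip (x m) z)" if "m \<in> A" for m
      using ip_conj[OF assms(2)[OF that] assms(3)] .
    show ?thesis unfolding cnj_sum complex_cnj_mult by (rule sum.cong[OF refl]) (simp add: eq)
  qed
  finally show ?thesis .
qed

lemma ip_self: "l2 x \<Longrightarrow> ip x x = complex_of_real (nsq x)"
proof -
  assume "l2 x"
  then have "(\<lambda>j. (cmod (x j))\<^sup>2) sums nsq x" unfolding l2_def nsq_def by (simp add: summable_sums)
  then have "(\<lambda>j. complex_of_real ((cmod (x j))\<^sup>2)) sums complex_of_real (nsq x)" by (simp only: sums_of_real_iff)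
  then show ?thesis unfolding ip_def complex_norm_square by (simp add: sums_iff)
qed

lemma nsq_nonneg: "l2 x \<Longrightarrow> 0 \<le> nsq x"
  unfolding nsq_def l2_def by (auto intro: suminf_nonneg)

lemma ip_diff_right: "l2 x \<Longrightarrow> l2 y \<Longrightarrow> l2 z \<Longrightarrow> ip z (\<lambda>j. x j - y j) = ip z x - ip z y"
proof -
  assume a: "l2 x" "l2 y" "l2 z"
  have "ip z (\<lambda>j. x j - y j) = cnj (ip (\<lambda>j. x j - y j) z)" by (rule ip_conj) (use a in \<open>auto intro: l2_diff\<close>)
  also have "\<dots> = cnj (ip x z) - cnj (ip y z)" using a by (simp add: ip_diff_left)
  also have "\<dots> = ip z x - ip z y" using a by (simp add: ip_conj[of z x] ip_conj[of z y])
  finally show ?thesis .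
qed

lemma coord_le_nsq: "l2 y \<Longrightarrow> (cmod (y j))\<^sup>2 \<le> nsq y"
  unfolding l2_def nsq_def using sum_le_suminf[of "\<lambda>j. (cmod (y j))\<^sup>2" "{j}"] by auto

lemma fatou_l2:
  assumes lim: "\<And>j. (\<lambda>M. y M j) \<longlonglongrightarrow> z j" and bd: "\<And>M. M \<ge> M0 \<Longrightarrow> l2 (y M) \<and> nsq (y M) \<le> B"
  shows "l2 z \<and> nsq z \<le> B"
proof -
  have le: "(\<Sum>j<N. (cmod (z j))\<^sup>2) \<le> B" for N
  proof (rule tendsto_le[OF _ tendsto_const])
    show "(\<lambda>M. \<Sum>j<N. (cmod (y M j))\<^sup>2) \<longlonglongrightarrow> (\<Sum>j<N. (cmod (z j))\<^sup>2)"
      by (intro tendsto_intros lim)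
    show "eventually (\<lambda>M. (\<Sum>j<N. (cmod (y M j))\<^sup>2) \<le> B) sequentially"
      unfolding eventually_sequentially
    proof (intro exI allI impI)
      fix M assume "M0 \<le> M"
      then have "l2 (y M)" "nsq (y M) \<le> B" using bd by auto
      then show "(\<Sum>j<N. (cmod (y M j))\<^sup>2) \<le> B"
        unfolding l2_def nsq_def using sum_le_suminf[of "\<lambda>j. (cmod (y M j))\<^sup>2" "{..<N}"] by auto
    qed
  qed simp
  have s: "summable (\<lambda>j. (cmod (z j))\<^sup>2)" by (rule summableI_nonneg_bounded[OF _ le]) simp
  then show ?thesis unfolding l2_def nsq_def using suminf_le_const[OF s le] by auto
qed

context
  fixes u :: "nat \<Rightarrow> nat \<Rightarrow> complex"
  assumes l2u: "\<And>m. l2 (u m)" and orth: "\<And>m k. ip (u m) (u k) = (if m = k then 1 else 0)"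
begin

lemma l2_comb: "finite A \<Longrightarrow> l2 (\<lambda>j. \<Sum>m\<in>A. c m * u m j)"
  by (rule l2_sum) (auto intro: l2u)

lemma ip_comb_u: "finite A \<Longrightarrow> ip (\<lambda>j. \<Sum>m\<in>A. c m * u m j) (u k) = (if k \<in> A then c k else 0)"
  by (simp add: ip_sum_left l2u orth if_distrib[of "\<lambda>x. _ * x"] cong: if_cong)

lemma ip_x_comb: "l2 x \<Longrightarrow> finite A \<Longrightarrow> ip x (\<lambda>j. \<Sum>m\<in>A. c m * u m j) = (\<Sum>m\<in>A. cnj (c m) * ip x (u m))"
  by (rule ip_sum_right) (auto intro: l2u)

lemma nsq_comb: "finite A \<Longrightarrow> nsq (\<lambda>j. \<Sum>m\<in>A. c m * u m j) = (\<Sum>m\<in>A. (cmod (c m))\<^sup>2)"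
proof -
  assume A: "finite A"
  have "complex_of_real (nsq (\<lambda>j. \<Sum>m\<in>A. c m * u m j)) = ip (\<lambda>j. \<Sum>m\<in>A. c m * u m j) (\<lambda>j. \<Sum>m\<in>A. c m * u m j)"
    by (rule ip_self[symmetric, OF l2_comb[OF A]])
  also have "\<dots> = (\<Sum>m\<in>A. cnj (c m) * ip (\<lambda>j. \<Sum>m\<in>A. c m * u m j) (u m))"
    by (rule ip_x_comb[OF l2_comb[OF A] A])
  also have "\<dots> = (\<Sum>m\<in>A. cnj (c m) * c m)"
    by (rule sum.cong[OF refl]) (simp add: ip_comb_u[OF A])
  also have "\<dots> = complex_of_real (\<Sum>m\<in>A. (cmod (c m))\<^sup>2)"
    unfolding of_real_sum complex_norm_square by (simp add: mult.commute)
  finally show ?thesis by (simp only: of_real_eq_iff)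
qed

lemma bessel_id:
  assumes x: "l2 x" and A: "finite A"
  shows "nsq (\<lambda>j. x j - (\<Sum>m\<in>A. ip x (u m) * u m j)) = nsq x - (\<Sum>m\<in>A. (cmod (ip x (u m)))\<^sup>2)"
proof -
  define s where "s = (\<lambda>j. \<Sum>m\<in>A. ip x (u m) * u m j)"
  define S where "S = (\<Sum>m\<in>A. (cmod (ip x (u m)))\<^sup>2)"
  have ls: "l2 s" unfolding s_def by (rule l2_comb[OF A])
  have xs: "ip x s = complex_of_real S"
    unfolding s_def S_def ip_x_comb[OF x A] of_real_sum complex_norm_square by (simp add: mult.commute)
  have sx: "ip s x = complex_of_real S" using ip_conj[OF x ls] xs by simp
  have ss: "ip s s = complex_of_real S" using ip_self[OF ls] nsq_comb[OF A] unfolding s_def S_def by simp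
  have "complex_of_real (nsq (\<lambda>j. x j - s j)) = ip (\<lambda>j. x j - s j) (\<lambda>j. x j - s j)"
    by (rule ip_self[symmetric]) (rule l2_diff[OF x ls])
  also have "\<dots> = ip x (\<lambda>j. x j - s j) - ip s (\<lambda>j. x j - s j)"
    by (rule ip_diff_left[OF x ls l2_diff[OF x ls]])
  also have "\<dots> = (ip x x - ip x s) - (ip s x - ip s s)"
    by (simp add: ip_diff_right x ls)
  also have "\<dots> = complex_of_real (nsq x - S)"
    using xs sx ss ip_self[OF x] by simp
  finally show ?thesis unfolding s_def S_def by (simp only: of_real_eq_iff)
qed

lemma bessel:
  assumes x: "l2 x" and A: "finite A"
  shows "(\<Sum>m\<in>A. (cmod (ip x (u m)))\<^sup>2) \<le> nsq x"
proof -
  have "0 \<le> nsq (\<lambda>j. x j - (\<Sum>m\<in>A. ip x (u m) * u m j))"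
    by (rule nsq_nonneg[OF l2_diff[OF x l2_comb[OF A]]])
  then show ?thesis using bessel_id[OF x A] by simp
qed

lemma parseval:
  assumes x: "l2 x" and total: "\<And>y. l2 y \<Longrightarrow> (\<And>m. ip y (u m) = 0) \<Longrightarrow> y = (\<lambda>_. 0)"
  shows "(\<lambda>m. (cmod (ip x (u m)))\<^sup>2) sums nsq x"
proof -
  define s where "s M = (\<lambda>j. \<Sum>m<M. ip x (u m) * u m j)" for M
  define cc where "cc m = (cmod (ip x (u m)))\<^sup>2" for m
  have bes: "(\<Sum>m<M. cc m) \<le> nsq x" for M
    unfolding cc_def by (rule bessel[OF x]) simp
  have sc: "summable cc" by (rule summableI_nonneg_bounded[OF _ bes]) (simp add: cc_def)
  define T where "T M = suminf cc - (\<Sum>m<M. cc m)" for M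
  have T0: "T \<longlonglongrightarrow> 0"
  proof -
    have "(\<lambda>M. suminf cc - (\<Sum>m<M. cc m)) \<longlonglongrightarrow> suminf cc - suminf cc"
      by (intro tendsto_diff tendsto_const summable_LIMSEQ sc)
    then show ?thesis by (simp add: T_def[abs_def])
  qed
  have Tmono: "T M' \<le> T M" if "M \<le> M'" for M M'
  proof -
    have "(\<Sum>m<M. cc m) \<le> (\<Sum>m<M'. cc m)"
      by (rule sum_mono2) (use that in \<open>auto simp: cc_def\<close>)
    then show ?thesis by (simp add: T_def)
  qed
  have ls: "l2 (s M)" for M unfolding s_def by (rule l2_comb) simp
  have diffs: "(\<lambda>j. s M' j - s M j) = (\<lambda>j. \<Sum>m\<in>{M..<M'}. ip x (u m) * u m j)" if "M \<le> M'" for M M'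
  proof
    fix j
    have "s M' j = s M j + (\<Sum>m\<in>{M..<M'}. ip x (u m) * u m j)"
      unfolding s_def lessThan_atLeast0 using sum.atLeastLessThan_concat[of 0 M M', symmetric] that by simp
    then show "s M' j - s M j = (\<Sum>m\<in>{M..<M'}. ip x (u m) * u m j)" by simp
  qed
  have nsqdiff: "nsq (\<lambda>j. s M' j - s M j) \<le> T M" if "M \<le> M'" for M M'
  proof -
    have "nsq (\<lambda>j. s M' j - s M j) = (\<Sum>m\<in>{M..<M'}. cc m)"
      unfolding diffs[OF that] cc_def by (rule nsq_comb) simp
    also have "\<dots> = (\<Sum>m<M'. cc m) - (\<Sum>m<M. cc m)"
    proof -
      have "(\<Sum>m<M'. cc m) = (\<Sum>m<M. cc m) + (\<Sum>m\<in>{M..<M'}. cc m)"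
        unfolding lessThan_atLeast0 using sum.atLeastLessThan_concat[of 0 M M' cc, symmetric] that by simp
      then show ?thesis by simp
    qed
    also have "\<dots> \<le> T M"
      unfolding T_def using sum_le_suminf[OF sc, of "{..<M'}"] by (simp add: cc_def)
    finally show ?thesis .
  qed
  have coordT: "(cmod (s M' j - s M j))\<^sup>2 \<le> T M" if "M \<le> M'" for M M' j
    using coord_le_nsq[OF l2_diff[OF ls[of M'] ls[of M]], of j] nsqdiff[OF that] by simp
  have cauchy: "Cauchy (\<lambda>M. s M j)" for j
  proof (rule CauchyI)
    fix e :: real assume e: "0 < e"
    then have "eventually (\<lambda>M. T M < e\<^sup>2) sequentially"
      using T0 by (simp add: order_tendstoD(2))
    then obtain N where N: "T N < e\<^sup>2" by (auto simp: eventually_sequentially)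
    have "norm (s m j - s n j) < e" if "m \<ge> N" "n \<ge> N" for m n
    proof -
      have "(cmod (s m j - s n j))\<^sup>2 < e\<^sup>2"
      proof (cases "m \<le> n")
        case True
        have "(cmod (s m j - s n j))\<^sup>2 = (cmod (s n j - s m j))\<^sup>2" by (simp add: norm_minus_commute)
        also have "\<dots> \<le> T m" by (rule coordT[OF True])
        also have "\<dots> \<le> T N" by (rule Tmono[OF that(1)])
        finally show ?thesis using N by simp
      next
        case False
        have "(cmod (s m j - s n j))\<^sup>2 \<le> T n" by (rule coordT) (use False in simp)
        also have "\<dots> \<le> T N" by (rule Tmono[OF that(2)])
        finally show ?thesis using N by simp
      qed
      then show ?thesis using e by (simp add: power_less_imp_less_base)
    qed
    then show "\<exists>M. \<forall>m\<ge>M. \<forall>n\<ge>M. norm (s m j - s n j) < e" by blast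
  qed
  define S where "S j = lim (\<lambda>M. s M j)" for j
  have S: "(\<lambda>M. s M j) \<longlonglongrightarrow> S j" for j
    unfolding S_def using cauchy[of j] by (simp add: Cauchy_convergent_iff convergent_LIMSEQ_iff)
  have tail: "l2 (\<lambda>j. S j - s M j) \<and> nsq (\<lambda>j. S j - s M j) \<le> T M" for M
  proof (rule fatou_l2[of "\<lambda>M' j. s M' j - s M j" "\<lambda>j. S j - s M j" M "T M"])
    show "(\<lambda>M'. s M' j - s M j) \<longlonglongrightarrow> S j - s M j" for j by (intro tendsto_intros S)
    show "l2 (\<lambda>j. s M' j - s M j) \<and> nsq (\<lambda>j. s M' j - s M j) \<le> T M" if "M \<le> M'" for M'
      using l2_diff[OF ls ls] nsqdiff[OF that] by simp
  qed
  define D where "D j = x j - S j" for j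
  have Deq: "D = (\<lambda>j. (x j - s M j) - (S j - s M j))" for M unfolding D_def by auto
  have lD: "l2 D" unfolding Deq[of 0] by (rule l2_diff[OF l2_diff[OF x ls]]) (use tail in blast)
  have orthD: "ip D (u k) = 0" for k
  proof -
    have le: "(cmod (ip D (u k)))\<^sup>2 \<le> T M" if "k < M" for M
    proof -
      have l1: "l2 (\<lambda>j. x j - s M j)" by (rule l2_diff[OF x ls])
      have l3: "l2 (\<lambda>j. S j - s M j)" using tail by blast
      have "ip (\<lambda>j. x j - s M j) (u k) = ip x (u k) - ip (s M) (u k)"
        by (rule ip_diff_left[OF x ls l2u])
      also have "ip (s M) (u k) = ip x (u k)" unfolding s_def using ip_comb_u[of "{..<M}" "\<lambda>m. ip x (u m)" k] that by simp
      finally have z: "ip (\<lambda>j. x j - s M j) (u k) = 0" by simp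
      have "ip D (u k) = ip (\<lambda>j. x j - s M j) (u k) - ip (\<lambda>j. S j - s M j) (u k)"
        unfolding Deq[of M] by (rule ip_diff_left[OF l1 l3 l2u])
      then have "ip D (u k) = - ip (\<lambda>j. S j - s M j) (u k)" using z by simp
      then have "(cmod (ip D (u k)))\<^sup>2 = (\<Sum>m\<in>{k}. (cmod (ip (\<lambda>j. S j - s M j) (u m)))\<^sup>2)" by simp
      also have "\<dots> \<le> nsq (\<lambda>j. S j - s M j)" by (rule bessel[OF l3]) simp
      also have "\<dots> \<le> T M" using tail by blast
      finally show ?thesis .
    qed
    have "(cmod (ip D (u k)))\<^sup>2 \<le> 0"
    proof (rule tendsto_le[OF _ T0 tendsto_const])
      show "eventually (\<lambda>M. (cmod (ip D (u k)))\<^sup>2 \<le> T M) sequentially"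
        unfolding eventually_sequentially using le by (intro exI[of _ "Suc k"]) auto
    qed simp
    then show ?thesis by simp
  qed
  have "D = (\<lambda>_. 0)" by (rule total[OF lD orthD])
  then have Sx: "S = x" unfolding D_def by (auto simp: fun_eq_iff)
  have up: "nsq x - (\<Sum>m<M. cc m) \<le> T M" for M
  proof -
    have "nsq x - (\<Sum>m<M. cc m) = nsq (\<lambda>j. x j - s M j)"
      unfolding s_def cc_def using bessel_id[OF x, of "{..<M}"] by simp
    also have "\<dots> \<le> T M" using tail[of M] Sx by simp
    finally show ?thesis .
  qed
  have "nsq x \<le> suminf cc" using up[of 0] by (simp add: T_def)
  moreover have "suminf cc \<le> nsq x" by (rule suminf_le_const[OF sc bes])
  ultimately have "suminf cc = nsq x" by simp
  then show ?thesis using sc unfolding cc_def by (simp add: sums_iff)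
qed

end

lemma binseries:
  fixes x :: real and p :: nat
  assumes x: "0 \<le> x" "x < 1"
  shows "(\<lambda>j. real ((j+p) choose p) * x^j) sums (1 / (1-x)^(p+1))"
proof -
  have "\<bar>-x\<bar> < 1" using x by simp
  from gen_binomial_real[OF this, of "- real (p+1)"]
  have A: "(\<lambda>j. ((- real (p+1)) gchoose j) * (-x)^j) sums (1 + - x) powr (- real (p+1))" .
  have "((- real (p+1)) gchoose j) * (-x)^j = real ((j+p) choose p) * x^j" for j
  proof -
    have "((- real (p+1)) gchoose j) = (-1)^j * ((real (p+1) + of_nat j - 1) gchoose j)"
      using gbinomial_minus[of "real (p+1)" j] .
    also have "(real (p+1) + of_nat j - 1) = real (j+p)" by simp
    also have "(real (j+p) gchoose j) = real ((j+p) choose j)" by (simp add: binomial_gbinomial)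
    also have "(j+p) choose j = (j+p) choose p" using binomial_symmetric[of j "j+p"] by simp
    finally have G: "((- real (p+1)) gchoose j) = (-1)^j * real ((j+p) choose p)" .
    have m: "(-1::real)^j * (-1)^j = 1" by (simp add: power_mult_distrib[symmetric])
    have "((- real (p+1)) gchoose j) * (-x)^j = ((-1)^j * (-1)^j) * (real ((j+p) choose p) * x^j)"
      unfolding G power_minus[of x j] by (simp only: mult_ac)
    then show ?thesis unfolding m by simp
  qed
  moreover have "(1 + - x) powr (- real (p+1)) = 1 / (1-x)^(p+1)"
  proof -
    have pos: "0 < 1 - x" using x by simp
    have "(1 + - x) powr (- real (p+1)) = inverse ((1-x) powr real (p+1))" using powr_minus[of "1-x" "real (p+1)"] by simp
    also have "\<dots> = inverse ((1-x)^(p+1))" using powr_realpow[OF pos, of "p+1"] by simp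
    finally show ?thesis by (simp only: inverse_eq_divide)
  qed
  ultimately show ?thesis using A by simp
qed

lemma fact_ineq1: "(fact (k+n) :: nat)^2 \<le> fact (k+2*n) * fact k"
proof (induction n)
  case 0 then show ?case by (simp add: power2_eq_square)
next
  case (Suc n)
  have e1: "(fact (k + Suc n) :: nat)^2 = (k+n+1)^2 * (fact (k+n))^2"
    unfolding add_Suc_right fact_Suc power_mult_distrib by simp
  have e2: "(fact (k + 2 * Suc n) :: nat) = (k+2*n+2) * (k+2*n+1) * fact (k+2*n)"
  proof -
    have "k + 2 * Suc n = Suc (Suc (k+2*n))" by simp
    then show ?thesis by (simp only: fact_Suc) (simp add: algebra_simps)
  qed
  have q: "(k+n+1)^2 \<le> (k+2*n+2) * (k+2*n+1)" by (simp add: power2_eq_square algebra_simps)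
  have "(fact (k + Suc n) :: nat)^2 \<le> (k+n+1)^2 * (fact (k+2*n) * fact k)"
    unfolding e1 by (rule mult_left_mono[OF Suc.IH]) simp
  also have "\<dots> \<le> ((k+2*n+2) * (k+2*n+1)) * (fact (k+2*n) * fact k)"
    by (rule mult_right_mono[OF q]) simp
  also have "\<dots> = fact (k + 2 * Suc n) * fact k" unfolding e2 by (simp only: mult.assoc)
  finally show ?case .
qed

lemma fact_ineq2: "(fact (k+2*n) :: nat) * fact k \<le> fact (2*n) * (fact (k+n))^2"
proof (induction k)
  case 0
  have "1 \<le> (fact n :: nat)^2" by (simp add: Suc_le_eq)
  then show ?case by simp
next
  case (Suc k)
  have e1: "(fact (Suc k + 2*n) :: nat) * fact (Suc k) = ((k+2*n+1) * (k+1)) * (fact (k+2*n) * fact k)"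
    by (simp add: algebra_simps)
  have e2: "(fact (Suc k + n) :: nat)^2 = (k+n+1)^2 * (fact (k+n))^2"
    unfolding add_Suc fact_Suc power_mult_distrib by simp
  have q: "(k+2*n+1) * (k+1) \<le> (k+n+1)^2" by (simp add: power2_eq_square algebra_simps)
  have "(fact (Suc k + 2*n) :: nat) * fact (Suc k) \<le> (k+n+1)^2 * (fact (2*n) * (fact (k+n))^2)"
    unfolding e1 by (rule mult_mono[OF q Suc.IH]) simp_all
  also have "\<dots> = fact (2*n) * (fact (Suc k + n))^2" unfolding e2 by (simp add: mult_ac)
  finally show ?case .
qed

definition Pn :: "nat \<Rightarrow> nat \<Rightarrow> real" where
  "Pn n k = fact (k+n) / fact k"

lemma Pn_nonneg: "0 \<le> Pn n k" by (simp add: Pn_def)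

lemma binom_real: "real ((k+2*n) choose (2*n)) = fact (k+2*n) / (fact (2*n) * fact k)"
  by (simp add: binomial_fact)

lemma Pn_upper: "(Pn n k)^2 \<le> fact (2*n) * real ((k+2*n) choose (2*n))"
proof -
  have "real ((fact (k+n) :: nat)^2) \<le> real (fact (k+2*n) * fact k)"
    using fact_ineq1[of k n] by (simp only: of_nat_le_iff)
  then have h: "(fact (k+n) :: real)^2 \<le> fact (k+2*n) * fact k" by (simp add: of_nat_fact)
  have "(Pn n k)^2 = (fact (k+n))^2 / (fact k)^2" by (simp add: Pn_def power_divide)
  also have "\<dots> \<le> (fact (k+2*n) * fact k) / (fact k)^2"
    by (rule divide_right_mono[OF h]) simp
  also have "\<dots> = fact (2*n) * real ((k+2*n) choose (2*n))"
    unfolding binom_real by (simp add: power2_eq_square field_simps)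
  finally show ?thesis .
qed

lemma Pn_lower: "real ((k+2*n) choose (2*n)) \<le> (Pn n k)^2"
proof -
  have "real ((fact (k+2*n) :: nat) * fact k) \<le> real (fact (2*n) * (fact (k+n))^2)"
    using fact_ineq2[of k n] by (simp only: of_nat_le_iff)
  then have h: "(fact (k+2*n) :: real) * fact k \<le> fact (2*n) * (fact (k+n))^2" by (simp add: of_nat_fact)
  have "real ((k+2*n) choose (2*n)) = (fact (k+2*n) * fact k) / (fact (2*n) * (fact k)^2)"
    unfolding binom_real by (simp add: power2_eq_square field_simps)
  also have "\<dots> \<le> (fact (2*n) * (fact (k+n))^2) / (fact (2*n) * (fact k)^2)"
    by (rule divide_right_mono[OF h]) simp
  also have "\<dots> = (Pn n k)^2" by (simp add: Pn_def power_divide)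
  finally show ?thesis .
qed

lemma GG_summable:
  assumes x: "0 \<le> x" "x < 1"
  shows "summable (\<lambda>k. (Pn n k)^2 * x^k)"
proof (rule summable_comparison_test'[where N=0])
  show "summable (\<lambda>k. fact (2*n) * (real ((k+2*n) choose (2*n)) * x^k))"
    by (rule summable_mult) (rule sums_summable[OF binseries[OF x]])
  fix k
  have "(Pn n k)^2 * x^k \<le> (fact (2*n) * real ((k+2*n) choose (2*n))) * x^k"
    by (rule mult_right_mono[OF Pn_upper]) (use x in simp)
  then show "norm ((Pn n k)^2 * x^k) \<le> fact (2*n) * (real ((k+2*n) choose (2*n)) * x^k)"
    using x by (simp add: mult_ac)
qed

lemma g_le_GG:
  assumes x: "0 \<le> x" "x < 1"
  shows "1 / (1-x)^(2*n+1) \<le> (\<Sum>k. (Pn n k)^2 * x^k)"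
proof (rule sums_le[OF _ binseries[OF x, of "2*n"] summable_sums[OF GG_summable[OF x]]])
  fix k show "real ((k+2*n) choose (2*n)) * x^k \<le> (Pn n k)^2 * x^k"
    by (rule mult_right_mono[OF Pn_lower]) (use x in simp)
qed

lemma GG_le:
  assumes x: "0 \<le> x" "x < 1"
  shows "(\<Sum>k. (Pn n k)^2 * x^k) \<le> fact (2*n) * (1 / (1-x)^(2*n+1))"
proof (rule sums_le[OF _ summable_sums[OF GG_summable[OF x]] sums_mult[OF binseries[OF x, of "2*n"]]])
  fix k show "(Pn n k)^2 * x^k \<le> fact (2*n) * (real ((k+2*n) choose (2*n)) * x^k)"
    using mult_right_mono[OF Pn_upper, of "x^k" n k] x by (simp add: mult_ac)
qed

lemma deriv_ps:
  assumes f: "f holomorphic_on ball 0 1" and w: "w \<in> ball 0 1"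
  shows "(\<lambda>k. cf f (k+n) * of_real (Pn n k) * w^k) sums (deriv ^^ n) f w"
proof -
  have h: "(deriv ^^ n) f holomorphic_on ball 0 1" by (rule holomorphic_higher_deriv[OF f]) simp
  have "cf ((deriv ^^ n) f) k = cf f (k+n) * of_real (Pn n k)" for k
  proof -
    have "(deriv ^^ k) ((deriv ^^ n) f) = (deriv ^^ (k+n)) f" by (simp add: funpow_add)
    then show ?thesis unfolding cf_def Pn_def by (simp add: field_simps)
  qed
  then show ?thesis using holo_ps[OF h w] by simp
qed

lemma cf_monomial: "cf (\<lambda>z. z^m) = (\<lambda>j. if j = m then 1 else 0)"
proof (rule cf_ps)
  fix z :: complex
  have "(\<lambda>j. if j = m then z^j else 0) sums z^m" by (rule sums_single)
  moreover have "(\<lambda>j. (if j = m then 1 else 0) * z^j) = (\<lambda>j. if j = m then z^j else 0)" by auto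
  ultimately show "(\<lambda>j. (if j = m then 1 else 0) * z^j) sums z^m" by simp
qed

lemma deriv_monomial:
  fixes w :: complex
  assumes w: "w \<in> ball 0 1"
  shows "(deriv ^^ n) (\<lambda>z. z^m) w = (if n \<le> m then of_real (Pn n (m-n)) * w^(m-n) else 0)"
proof -
  have h: "(\<lambda>z::complex. z^m) holomorphic_on ball 0 1" by (intro holomorphic_intros)
  have S: "(\<lambda>k. (if k+n = m then 1 else 0) * of_real (Pn n k) * w^k) sums (deriv ^^ n) (\<lambda>z. z^m) w"
    using deriv_ps[OF h w, of n] unfolding cf_monomial .
  show ?thesis
  proof (cases "n \<le> m")
    case True
    have "(\<lambda>k. (if k+n = m then 1 else 0) * of_real (Pn n k) * w^k) = (\<lambda>k. if k = m-n then of_real (Pn n k) * w^k else 0)"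
      using True by (auto simp: fun_eq_iff)
    moreover have "(\<lambda>k. if k = m-n then of_real (Pn n k) * w^k else 0) sums (of_real (Pn n (m-n)) * w^(m-n))"
      by (rule sums_single)
    ultimately show ?thesis using S True sums_unique2 by fastforce
  next
    case False
    have "(\<lambda>k. (if k+n = m then 1 else 0) * of_real (Pn n k) * w^k) = (\<lambda>k. 0)"
      using False by (auto simp: fun_eq_iff)
    then show ?thesis using S False sums_unique2[OF _ sums_zero] by fastforce
  qed
qed

lemma monomial_in_H2: "in_H2 (\<lambda>z. z^m)"
  unfolding in_H2_iff cf_monomial
proof
  show "(\<lambda>z. z^m) holomorphic_on ball 0 1" by (intro holomorphic_intros)
  have "(\<lambda>k. (cmod (if k = m then 1 else 0 :: complex))\<^sup>2) = (\<lambda>k. if k = m then 1 else 0)" by auto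
  then show "summable (\<lambda>k. (cmod (if k = m then 1 else 0 :: complex))\<^sup>2)" by simp
qed

lemma H2_inner_cf_monomial:
  assumes "in_H2 f" shows "H2_inner f (\<lambda>z. z^m) = cf f m"
proof -
  have "H2_inner f (\<lambda>z. z^m) = (\<Sum>k. cf f k * cnj (if k = m then 1 else 0))"
    using H2_inner_eq[OF assms monomial_in_H2] unfolding cf_monomial .
  also have "(\<lambda>k. cf f k * cnj (if k = m then 1 else 0)) = (\<lambda>k. if k = m then cf f k else 0)" by auto
  also have "(\<Sum>k. if k = m then cf f k else 0) = cf f m" using sums_single[of m "cf f"] by (simp add: sums_iff)
  finally show ?thesis .
qed

lemma monomial_ONB: "H2_ONB (\<lambda>m z. z^m)"
  unfolding H2_ONB_def
proof (intro conjI allI impI)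
  show "in_H2 (\<lambda>z. z^m)" for m by (rule monomial_in_H2)
  show "H2_inner (\<lambda>z. z^j) (\<lambda>z. z^k) = (if j = k then 1 else 0)" for j k
    using H2_inner_cf_monomial[OF monomial_in_H2] unfolding cf_monomial by simp
  fix f assume A: "in_H2 f \<and> (\<forall>m. H2_inner f (\<lambda>z. z^m) = 0)"
  then have hf: "f holomorphic_on ball 0 1" by (auto simp: in_H2_def)
  have cf0: "cf f m = 0" for m using A H2_inner_cf_monomial[of f m] by auto
  show "\<forall>z\<in>ball 0 1. f z = 0"
  proof
    fix z :: complex assume "z \<in> ball 0 1"
    from holo_ps[OF hf this] show "f z = 0" by (simp add: cf0 sums_iff)
  qed
qed

lemma H2_mean_le_norm:
  assumes h: "in_H2 h" and r: "0 \<le> r" "r < 1"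
  shows "H2_mean h r \<le> (H2_norm h)\<^sup>2"
proof -
  have "H2_mean h r = (\<Sum>k. (cmod (cf h k))\<^sup>2 * r^(2*k))"
    using H2_mean_ps[OF in_H2_imp(1)[OF h] r] by (simp add: sums_iff)
  also have "\<dots> \<le> (\<Sum>k. (cmod (cf h k))\<^sup>2)"
  proof (rule suminf_le)
    show "summable (\<lambda>k. (cmod (cf h k))\<^sup>2 * r^(2*k))"
      using H2_mean_ps[OF in_H2_imp(1)[OF h] r] by (simp add: sums_iff)
    show "summable (\<lambda>k. (cmod (cf h k))\<^sup>2)" by (rule in_H2_imp(2)[OF h])
    fix k show "(cmod (cf h k))\<^sup>2 * r^(2*k) \<le> (cmod (cf h k))\<^sup>2"
      using r by (intro mult_left_le power_le_one) auto
  qed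
  finally show ?thesis using H2_norm_sq[OF h] by simp
qed

lemma H2_mean_mono:
  assumes h: "h holomorphic_on ball 0 1" and r: "0 \<le> r1" "r1 \<le> r2" "r2 < 1"
  shows "H2_mean h r1 \<le> H2_mean h r2"
proof (rule sums_le[OF _ H2_mean_ps[OF h, of r1] H2_mean_ps[OF h, of r2]])
  fix k show "(cmod (cf h k))\<^sup>2 * r1^(2*k) \<le> (cmod (cf h k))\<^sup>2 * r2^(2*k)"
    using r by (intro mult_left_mono power_mono) auto
qed (use r in auto)

lemma l2_cf: "in_H2 f \<Longrightarrow> l2 (cf f)"
  unfolding l2_def using in_H2_imp(2) .

lemma ip_cf: "in_H2 f \<Longrightarrow> in_H2 g \<Longrightarrow> H2_inner f g = ip (cf f) (cf g)"
  unfolding ip_def by (rule H2_inner_eq)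

lemma l2_to_H2:
  assumes y: "l2 y"
  obtains F where "in_H2 F" "cf F = y" "\<And>z. z \<in> ball 0 1 \<Longrightarrow> (\<lambda>j. y j * z^j) sums F z"
proof -
  define B where "B = sqrt (nsq y)"
  have yb: "cmod (y j) \<le> B" for j
    unfolding B_def using coord_le_nsq[OF y, of j] by (simp add: real_le_rsqrt)
  define F where "F z = (\<Sum>j. y j * z^j)" for z
  have S: "(\<lambda>j. y j * z^j) sums F z" if z: "z \<in> ball 0 1" for z
  proof -
    have "summable (\<lambda>j. y j * z^j)"
    proof (rule summable_comparison_test'[where N=0])
      show "summable (\<lambda>j. B * cmod z ^ j)" using z by (intro summable_mult summable_geometric) auto
      fix j show "norm (y j * z^j) \<le> B * cmod z ^ j"
        by (simp add: norm_mult norm_power mult_right_mono[OF yb])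
    qed
    then show ?thesis unfolding F_def by (simp add: summable_sums)
  qed
  have cfF: "cf F = y" by (rule cf_ps[OF S])
  have "in_H2 F" unfolding in_H2_iff cfF using ps_holo[OF S] y by (simp add: l2_def)
  with cfF S show ?thesis using that by blast
qed

lemma phi_circ_lt:
  assumes "\<phi> ` ball 0 1 \<subseteq> ball 0 1" "0 \<le> r" "r < 1"
  shows "cmod (\<phi> (complex_of_real r * exp (\<i> * complex_of_real t))) < 1"
proof -
  have "\<phi> (complex_of_real r * exp (\<i> * complex_of_real t)) \<in> ball 0 1"
    using assms(1) circ_in_ball[OF assms(2,3), of t] by blast
  then show ?thesis by simp
qed

lemma Gm_series:
  assumes phi: "\<phi> holomorphic_on ball 0 1" "\<phi> ` ball 0 1 \<subseteq> ball 0 1" and r: "0 \<le> r" "r < 1"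
  shows "(\<lambda>j. real ((j+2*n) choose (2*n)) * H2_mean (\<lambda>z. \<phi> z ^ j) r) sums
    ((1/(2*pi)) * integral {0..2*pi} (\<lambda>\<theta>. 1 / (1 - (cmod (\<phi> (complex_of_real r * exp (\<i> * complex_of_real \<theta>))))\<^sup>2)^(2*n+1)))"
proof -
  define a where "a \<theta> = (cmod (\<phi> (complex_of_real r * exp (\<i> * complex_of_real \<theta>))))\<^sup>2" for \<theta>
  define C where "C j = real ((j+2*n) choose (2*n))" for j
  have ca: "continuous_on {0..2*pi} a" unfolding a_def by (intro continuous_intros circ_cont[OF phi(1) r])
  have a0: "0 \<le> a \<theta>" for \<theta> unfolding a_def by simp
  have a1: "a \<theta> < 1" for \<theta>
  proof -
    have "cmod (\<phi> (complex_of_real r * exp (\<i> * complex_of_real \<theta>))) < 1" by (rule phi_circ_lt[OF phi(2) r])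
    then show ?thesis unfolding a_def by (simp add: power_less_one_iff abs_square_less_1)
  qed
  obtain \<theta>0 where "\<theta>0 \<in> {0..2*pi}" and mx: "\<And>\<theta>. \<theta> \<in> {0..2*pi} \<Longrightarrow> a \<theta> \<le> a \<theta>0"
    using continuous_attains_sup[OF compact_Icc _ ca] by auto
  define \<rho> where "\<rho> = a \<theta>0"
  have \<rho>: "0 \<le> \<rho>" "\<rho> < 1" unfolding \<rho>_def using a0 a1 by auto
  define u where "u j \<theta> = C j * a \<theta> ^ j" for j \<theta>
  have cu: "continuous_on {0..2*pi} (u j)" for j unfolding u_def by (intro continuous_intros ca)
  have bd: "norm (u j \<theta>) \<le> C j * \<rho>^j" if "\<theta> \<in> {0..2*pi}" for j \<theta>
    unfolding u_def \<rho>_def using mx[OF that] a0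
    by (auto simp: C_def abs_mult intro!: mult_left_mono power_mono)
  have M: "summable (\<lambda>j. C j * \<rho>^j)" unfolding C_def using binseries[OF \<rho>] by (simp add: sums_iff)
  from int_series[where a=0 and b="2*pi", OF cu bd M]
  have A: "(\<lambda>j. integral {0..2*pi} (u j)) sums integral {0..2*pi} (\<lambda>x. \<Sum>j. u j x)" by auto
  have E: "(\<lambda>x. \<Sum>j. u j x) = (\<lambda>\<theta>. 1 / (1 - a \<theta>)^(2*n+1))"
  proof
    fix \<theta> show "(\<Sum>j. u j \<theta>) = 1 / (1 - a \<theta>)^(2*n+1)"
      using binseries[OF a0 a1, of "2*n"] unfolding u_def C_def by (simp add: sums_iff)
  qed
  have ui: "integral {0..2*pi} (u j) = C j * (2*pi * H2_mean (\<lambda>z. \<phi> z ^ j) r)" for j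
  proof -
    have "(\<lambda>\<theta>. a \<theta> ^ j) = (\<lambda>\<theta>. (cmod ((\<lambda>z. \<phi> z ^ j) (complex_of_real r * exp (\<i> * complex_of_real \<theta>))))\<^sup>2)"
      unfolding a_def by (simp add: norm_power power_mult[symmetric] mult.commute)
    then have "integral {0..2*pi} (\<lambda>\<theta>. a \<theta> ^ j) = 2*pi * H2_mean (\<lambda>z. \<phi> z ^ j) r"
      unfolding H2_mean_def by simp
    then show ?thesis unfolding u_def by simp
  qed
  have "(\<lambda>j. (1/(2*pi)) * integral {0..2*pi} (u j)) sums ((1/(2*pi)) * integral {0..2*pi} (\<lambda>x. \<Sum>j. u j x))"
    by (rule sums_mult[OF A])
  then show ?thesis unfolding E ui a_def C_def by simp
qed

lemma Gm_mono:
  assumes phi: "\<phi> holomorphic_on ball 0 1" "\<phi> ` ball 0 1 \<subseteq> ball 0 1" and r: "0 \<le> r1" "r1 \<le> r2" "r2 < 1"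
  shows "(1/(2*pi)) * integral {0..2*pi} (\<lambda>\<theta>. 1 / (1 - (cmod (\<phi> (complex_of_real r1 * exp (\<i> * complex_of_real \<theta>))))\<^sup>2)^(2*n+1))
    \<le> (1/(2*pi)) * integral {0..2*pi} (\<lambda>\<theta>. 1 / (1 - (cmod (\<phi> (complex_of_real r2 * exp (\<i> * complex_of_real \<theta>))))\<^sup>2)^(2*n+1))"
proof (rule sums_le[OF _ Gm_series[OF phi, of r1 n] Gm_series[OF phi, of r2 n]])
  fix j
  have "(\<lambda>z. \<phi> z ^ j) holomorphic_on ball 0 1" using phi(1) by (intro holomorphic_intros)
  then show "real ((j+2*n) choose (2*n)) * H2_mean (\<lambda>z. \<phi> z ^ j) r1 \<le> real ((j+2*n) choose (2*n)) * H2_mean (\<lambda>z. \<phi> z ^ j) r2"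
    by (intro mult_left_mono H2_mean_mono[OF _ r]) auto
qed (use r in auto)

lemma g_cont:
  assumes phi: "\<phi> holomorphic_on ball 0 1" "\<phi> ` ball 0 1 \<subseteq> ball 0 1" and r: "0 \<le> r" "r < 1"
  shows "continuous_on {0..2*pi} (\<lambda>\<theta>. 1 / (1 - (cmod (\<phi> (complex_of_real r * exp (\<i> * complex_of_real \<theta>))))\<^sup>2) ^ (2*n+1))"
proof (intro continuous_intros circ_cont[OF phi(1) r] ballI)
  fix \<theta> :: real
  have "cmod (\<phi> (complex_of_real r * exp (\<i> * complex_of_real \<theta>))) < 1" by (rule phi_circ_lt[OF phi(2) r])
  then have "(cmod (\<phi> (complex_of_real r * exp (\<i> * complex_of_real \<theta>))))\<^sup>2 < 1"
    by (simp add: abs_square_less_1)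
  then show "(1 - (cmod (\<phi> (complex_of_real r * exp (\<i> * complex_of_real \<theta>))))\<^sup>2) ^ (2*n+1) \<noteq> 0" by simp
qed

lemma D_monomial_sums:
  assumes phi2: "\<phi> ` ball 0 1 \<subseteq> ball 0 1" and z: "z \<in> ball 0 1"
  shows "(\<lambda>m. (cmod (D_op \<phi> n (\<lambda>w. w^m) z))\<^sup>2) sums (\<Sum>k. (Pn n k)\<^sup>2 * ((cmod (\<phi> z))\<^sup>2)^k)"
proof -
  have pz: "\<phi> z \<in> ball 0 1" using phi2 z by blast
  define x where "x = (cmod (\<phi> z))\<^sup>2"
  have x: "0 \<le> x" "x < 1" using pz by (auto simp: x_def abs_square_less_1)
  have hf: "D_op \<phi> n (\<lambda>w. w^m) z = (if n \<le> m then of_real (Pn n (m-n)) * \<phi> z^(m-n) else 0)" for m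
    unfolding D_op_def using deriv_monomial[OF pz, of n m] .
  have "(\<lambda>k. (cmod (D_op \<phi> n (\<lambda>w. w^(k+n)) z))\<^sup>2) = (\<lambda>k. (Pn n k)\<^sup>2 * x^k)"
  proof
    fix k
    have "(cmod (D_op \<phi> n (\<lambda>w. w^(k+n)) z))\<^sup>2 = (\<bar>Pn n k\<bar> * cmod (\<phi> z) ^ k)\<^sup>2"
      unfolding hf by (simp add: norm_mult norm_power)
    also have "\<dots> = (Pn n k)\<^sup>2 * x^k"
      unfolding x_def by (simp add: power_mult_distrib power_mult[symmetric] mult.commute)
    finally show "(cmod (D_op \<phi> n (\<lambda>w. w^(k+n)) z))\<^sup>2 = (Pn n k)\<^sup>2 * x^k" .
  qed
  then have "(\<lambda>k. (cmod (D_op \<phi> n (\<lambda>w. w^(k+n)) z))\<^sup>2) sums (\<Sum>k. (Pn n k)\<^sup>2 * x^k)"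
    using summable_sums[OF GG_summable[OF x]] by simp
  then show ?thesis unfolding x_def[symmetric]
    by (subst (asm) sums_zero_iff_shift) (auto simp: hf)
qed

lemma HS_if:
  assumes phi: "\<phi> holomorphic_on ball 0 1" "\<phi> ` ball 0 1 \<subseteq> ball 0 1"
    and bdd: "H2_bounded_op (D_op \<phi> n)"
    and L: "((\<lambda>r. (1 / (2*pi)) * integral {0..2*pi}
        (\<lambda>\<theta>. 1 / (1 - (cmod (\<phi> (complex_of_real r * exp (\<i> * complex_of_real \<theta>))))\<^sup>2) ^ (2*n+1)))
      \<longlongrightarrow> L) (at_left 1)"
  shows "H2_Hilbert_Schmidt (D_op \<phi> n)"
proof -
  define h where "h m = D_op \<phi> n (\<lambda>z. z^m)" for m
  define G where "G r = (1 / (2*pi)) * integral {0..2*pi}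
        (\<lambda>\<theta>. 1 / (1 - (cmod (\<phi> (complex_of_real r * exp (\<i> * complex_of_real \<theta>))))\<^sup>2) ^ (2*n+1))" for r
  have inh: "in_H2 (h m)" for m using bdd monomial_in_H2 unfolding H2_bounded_op_def h_def by blast
  have psum: "(\<Sum>m<M. (cmod (h m z))\<^sup>2) \<le> fact (2*n) * (1 / (1 - (cmod (\<phi> z))\<^sup>2)^(2*n+1))"
    if z: "z \<in> ball 0 1" for z M
  proof -
    have pz: "\<phi> z \<in> ball 0 1" using phi(2) z by blast
    have x: "0 \<le> (cmod (\<phi> z))\<^sup>2" "(cmod (\<phi> z))\<^sup>2 < 1" using pz by (auto simp: abs_square_less_1)
    have S: "(\<lambda>m. (cmod (h m z))\<^sup>2) sums (\<Sum>k. (Pn n k)\<^sup>2 * ((cmod (\<phi> z))\<^sup>2)^k)"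
      unfolding h_def by (rule D_monomial_sums[OF phi(2) z])
    have "(\<Sum>m<M. (cmod (h m z))\<^sup>2) \<le> (\<Sum>k. (Pn n k)\<^sup>2 * ((cmod (\<phi> z))\<^sup>2)^k)"
      using sum_le_suminf[OF sums_summable[OF S], of "{..<M}"] S by (simp add: sums_iff)
    also have "\<dots> \<le> fact (2*n) * (1 / (1 - (cmod (\<phi> z))\<^sup>2)^(2*n+1))" by (rule GG_le[OF x])
    finally show ?thesis .
  qed
  have bound: "(\<Sum>m<M. H2_mean (h m) r) \<le> fact (2*n) * G r" if r: "0 \<le> r" "r < 1" for M r
  proof -
    have ci: "(\<lambda>\<theta>. (cmod (h m (complex_of_real r * exp (\<i> * complex_of_real \<theta>))))\<^sup>2) integrable_on {0..2*pi}" for m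
      by (intro integrable_continuous_real continuous_intros circ_cont[OF in_H2_imp(1)[OF inh] r])
    have gi: "(\<lambda>\<theta>. fact (2*n) * (1 / (1 - (cmod (\<phi> (complex_of_real r * exp (\<i> * complex_of_real \<theta>))))\<^sup>2) ^ (2*n+1))) integrable_on {0..2*pi}"
      by (intro integrable_continuous_real continuous_intros g_cont[OF phi r])
    have eq1: "(\<Sum>m<M. H2_mean (h m) r) = (1/(2*pi)) * (\<Sum>m<M. integral {0..2*pi} (\<lambda>\<theta>. (cmod (h m (complex_of_real r * exp (\<i> * complex_of_real \<theta>))))\<^sup>2))"
      unfolding H2_mean_def by (simp add: sum_distrib_left)
    have eq2: "(\<Sum>m<M. integral {0..2*pi} (\<lambda>\<theta>. (cmod (h m (complex_of_real r * exp (\<i> * complex_of_real \<theta>))))\<^sup>2))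
        = integral {0..2*pi} (\<lambda>\<theta>. \<Sum>m<M. (cmod (h m (complex_of_real r * exp (\<i> * complex_of_real \<theta>))))\<^sup>2)"
      by (rule Henstock_Kurzweil_Integration.integral_sum[symmetric]) (auto intro: ci)
    have le1: "integral {0..2*pi} (\<lambda>\<theta>. \<Sum>m<M. (cmod (h m (complex_of_real r * exp (\<i> * complex_of_real \<theta>))))\<^sup>2)
       \<le> integral {0..2*pi} (\<lambda>\<theta>. fact (2*n) * (1 / (1 - (cmod (\<phi> (complex_of_real r * exp (\<i> * complex_of_real \<theta>))))\<^sup>2) ^ (2*n+1)))"
      by (rule integral_le[OF integrable_sum[OF _ ci] gi]) (simp, rule psum[OF circ_in_ball[OF r]])
    have eq3: "integral {0..2*pi} (\<lambda>\<theta>. fact (2*n) * (1 / (1 - (cmod (\<phi> (complex_of_real r * exp (\<i> * complex_of_real \<theta>))))\<^sup>2) ^ (2*n+1)))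
      = fact (2*n) * integral {0..2*pi} (\<lambda>\<theta>. 1 / (1 - (cmod (\<phi> (complex_of_real r * exp (\<i> * complex_of_real \<theta>))))\<^sup>2) ^ (2*n+1))"
      by (rule Henstock_Kurzweil_Integration.integral_mult_right)
    have "(\<Sum>m<M. H2_mean (h m) r) \<le> (1/(2*pi)) * (fact (2*n) * integral {0..2*pi} (\<lambda>\<theta>. 1 / (1 - (cmod (\<phi> (complex_of_real r * exp (\<i> * complex_of_real \<theta>))))\<^sup>2) ^ (2*n+1)))"
      unfolding eq1 eq2 eq3[symmetric] by (rule mult_left_mono[OF le1]) simp
    then show ?thesis unfolding G_def by (simp only: mult_ac)
  qed
  have le: "(\<Sum>m<M. (H2_norm (h m))\<^sup>2) \<le> fact (2*n) * L" for M
  proof (rule tendsto_le[of "at_left 1"])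
    show "((\<lambda>r. fact (2*n) * G r) \<longlongrightarrow> fact (2*n) * L) (at_left 1)"
      unfolding G_def by (intro tendsto_intros L)
    show "((\<lambda>r. \<Sum>m<M. H2_mean (h m) r) \<longlongrightarrow> (\<Sum>m<M. (H2_norm (h m))\<^sup>2)) (at_left 1)"
      unfolding H2_norm_sq[OF inh] by (intro tendsto_sum in_H2_imp(3)[OF inh])
    show "eventually (\<lambda>r. (\<Sum>m<M. H2_mean (h m) r) \<le> fact (2*n) * G r) (at_left 1)"
      using at_left_1_eventually by eventually_elim (auto intro: bound)
  qed simp
  have "summable (\<lambda>m. (H2_norm (h m))\<^sup>2)" by (rule summableI_nonneg_bounded[OF _ le]) simp
  then show ?thesis unfolding H2_Hilbert_Schmidt_def h_def using bdd monomial_ONB by blast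
qed

lemma ONB_pointwise:
  assumes ONB: "H2_ONB e" and w: "w \<in> ball 0 1"
  shows "(\<lambda>m. (cmod ((deriv ^^ n) (e m) w))\<^sup>2) sums (\<Sum>k. (Pn n k)\<^sup>2 * ((cmod w)\<^sup>2)^k)"
proof -
  have ine: "in_H2 (e m)" for m using ONB by (simp add: H2_ONB_def)
  define u where "u m = cf (e m)" for m
  have l2u: "l2 (u m)" for m unfolding u_def by (rule l2_cf[OF ine])
  have orth: "ip (u m) (u k) = (if m = k then 1 else 0)" for m k
    unfolding u_def using ip_cf[OF ine ine, of m k] ONB by (simp add: H2_ONB_def)
  have total: "y = (\<lambda>_. 0)" if y: "l2 y" and o: "\<And>m. ip y (u m) = 0" for y
  proof -
    obtain F where F: "in_H2 F" "cf F = y" and S: "\<And>z. z \<in> ball 0 1 \<Longrightarrow> (\<lambda>j. y j * z^j) sums F z"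
      using l2_to_H2[OF y] by blast
    have "H2_inner F (e m) = 0" for m using ip_cf[OF F(1) ine, of m] o[of m] F(2) by (simp add: u_def)
    then have F0: "\<forall>z\<in>ball 0 1. F z = 0" using ONB F(1) by (simp add: H2_ONB_def)
    have "y = (\<lambda>_. 0)"
    proof (rule ps_unique)
      fix z :: complex assume z: "z \<in> ball 0 1"
      show "(\<lambda>j. y j * z^j) sums F z" by (rule S[OF z])
      show "(\<lambda>j. 0 * z^j) sums F z" using F0 z by simp
    qed
    then show ?thesis .
  qed
  define x where "x = (cmod w)\<^sup>2"
  have x: "0 \<le> x" "x < 1" using w by (auto simp: x_def abs_square_less_1)
  define K where "K j = (if n \<le> j then of_real (Pn n (j-n)) * cnj w ^ (j-n) else 0)" for j
  have Ksh: "(\<lambda>k. (cmod (K (k+n)))\<^sup>2) = (\<lambda>k. (Pn n k)\<^sup>2 * x^k)"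
  proof
    fix k
    have "(cmod (K (k+n)))\<^sup>2 = (\<bar>Pn n k\<bar> * cmod w ^ k)\<^sup>2"
      unfolding K_def by (simp add: norm_mult norm_power)
    also have "\<dots> = (Pn n k)\<^sup>2 * x^k"
      unfolding x_def by (simp add: power_mult_distrib power_mult[symmetric] mult.commute)
    finally show "(cmod (K (k+n)))\<^sup>2 = (Pn n k)\<^sup>2 * x^k" .
  qed
  have KS: "(\<lambda>j. (cmod (K j))\<^sup>2) sums (\<Sum>k. (Pn n k)\<^sup>2 * x^k)"
  proof -
    have "(\<lambda>k. (cmod (K (k+n)))\<^sup>2) sums (\<Sum>k. (Pn n k)\<^sup>2 * x^k)"
      unfolding Ksh by (rule summable_sums[OF GG_summable[OF x]])
    then show ?thesis by (subst (asm) sums_zero_iff_shift) (auto simp: K_def)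
  qed
  have lK: "l2 K" using KS unfolding l2_def by (simp add: sums_iff)
  have nK: "nsq K = (\<Sum>k. (Pn n k)\<^sup>2 * x^k)" using KS unfolding nsq_def by (simp add: sums_iff)
  have ipK: "ip (u m) K = (deriv ^^ n) (e m) w" for m
  proof -
    have he: "e m holomorphic_on ball 0 1" using ine[of m] by (simp add: in_H2_def)
    have "(\<lambda>k. u m (k+n) * cnj (K (k+n))) = (\<lambda>k. cf (e m) (k+n) * of_real (Pn n k) * w^k)"
      unfolding K_def u_def by auto
    then have "(\<lambda>k. u m (k+n) * cnj (K (k+n))) sums (deriv ^^ n) (e m) w"
      using deriv_ps[OF he w, of n] by simp
    then have "(\<lambda>j. u m j * cnj (K j)) sums (deriv ^^ n) (e m) w"
      by (subst (asm) sums_zero_iff_shift) (auto simp: K_def)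
    then show ?thesis unfolding ip_def by (simp add: sums_iff)
  qed
  have P: "(\<lambda>m. (cmod (ip K (u m)))\<^sup>2) sums nsq K"
    by (rule parseval[OF l2u orth lK total]) auto
  have "ip K (u m) = cnj ((deriv ^^ n) (e m) w)" for m
    using ip_conj[OF l2u lK, of m] ipK[of m] by simp
  then show ?thesis using P unfolding nK x_def by simp
qed

lemma HS_only_if:
  assumes phi: "\<phi> holomorphic_on ball 0 1" "\<phi> ` ball 0 1 \<subseteq> ball 0 1"
    and HS: "H2_Hilbert_Schmidt (D_op \<phi> n)"
  shows "\<exists>L. ((\<lambda>r. (1 / (2*pi)) * integral {0..2*pi}
        (\<lambda>\<theta>. 1 / (1 - (cmod (\<phi> (complex_of_real r * exp (\<i> * complex_of_real \<theta>))))\<^sup>2) ^ (2*n+1)))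
      \<longlongrightarrow> L) (at_left 1)"
proof -
  define G where "G r = (1 / (2*pi)) * integral {0..2*pi}
        (\<lambda>\<theta>. 1 / (1 - (cmod (\<phi> (complex_of_real r * exp (\<i> * complex_of_real \<theta>))))\<^sup>2) ^ (2*n+1))" for r
  obtain e where ONB: "H2_ONB e" and sm: "summable (\<lambda>m. (H2_norm (D_op \<phi> n (e m)))\<^sup>2)"
    and bdd: "H2_bounded_op (D_op \<phi> n)"
    using HS unfolding H2_Hilbert_Schmidt_def by blast
  define h where "h m = D_op \<phi> n (e m)" for m
  have inh: "in_H2 (h m)" for m using bdd ONB unfolding H2_bounded_op_def H2_ONB_def h_def by blast
  define S where "S = (\<Sum>m. (H2_norm (h m))\<^sup>2)"
  have smh: "summable (\<lambda>m. (H2_norm (h m))\<^sup>2)" using sm unfolding h_def .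
  have pw: "(\<lambda>m. (cmod (h m z))\<^sup>2) sums (\<Sum>k. (Pn n k)\<^sup>2 * ((cmod (\<phi> z))\<^sup>2)^k)" if z: "z \<in> ball 0 1" for z
  proof -
    have "\<phi> z \<in> ball 0 1" using phi(2) z by blast
    from ONB_pointwise[OF ONB this, of n] show ?thesis unfolding h_def D_op_def .
  qed
  have Gle: "G r \<le> S" if r: "0 \<le> r" "r < 1" for r
  proof -
    define c where "c \<theta> = complex_of_real r * exp (\<i> * complex_of_real \<theta>)" for \<theta>
    have cb: "c \<theta> \<in> ball 0 1" for \<theta> unfolding c_def by (rule circ_in_ball[OF r])
    define f where "f M \<theta> = (\<Sum>m<M. (cmod (h m (c \<theta>)))\<^sup>2)" for M \<theta>
    define gg where "gg \<theta> = (\<Sum>k. (Pn n k)\<^sup>2 * ((cmod (\<phi> (c \<theta>)))\<^sup>2)^k)" for \<theta>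
    have ci: "(\<lambda>\<theta>. (cmod (h m (c \<theta>)))\<^sup>2) integrable_on {0..2*pi}" for m
      unfolding c_def by (intro integrable_continuous_real continuous_intros circ_cont[OF in_H2_imp(1)[OF inh] r])
    have fi: "f M integrable_on {0..2*pi}" for M unfolding f_def by (rule integrable_sum) (auto intro: ci)
    have intf: "integral {0..2*pi} (f M) = 2*pi * (\<Sum>m<M. H2_mean (h m) r)" for M
    proof -
      have "integral {0..2*pi} (f M) = (\<Sum>m<M. integral {0..2*pi} (\<lambda>\<theta>. (cmod (h m (c \<theta>)))\<^sup>2))"
        unfolding f_def by (rule Henstock_Kurzweil_Integration.integral_sum) (auto intro: ci)
      also have "\<dots> = (\<Sum>m<M. 2*pi * H2_mean (h m) r)"
        unfolding H2_mean_def c_def by simp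
      finally show ?thesis by (simp add: sum_distrib_left)
    qed
    have intfS: "integral {0..2*pi} (f M) \<le> 2*pi * S" for M
    proof -
      have "(\<Sum>m<M. H2_mean (h m) r) \<le> (\<Sum>m<M. (H2_norm (h m))\<^sup>2)"
        by (rule sum_mono) (rule H2_mean_le_norm[OF inh r])
      also have "\<dots> \<le> S" unfolding S_def by (rule sum_le_suminf[OF smh]) auto
      finally show ?thesis unfolding intf by simp
    qed
    have intf0: "0 \<le> integral {0..2*pi} (f M)" for M
      by (rule integral_nonneg[OF fi]) (auto simp: f_def intro: sum_nonneg)
    have MCT: "gg integrable_on {0..2*pi} \<and> (\<lambda>M. integral {0..2*pi} (f M)) \<longlonglongrightarrow> integral {0..2*pi} gg"
    proof (rule monotone_convergence_increasing[OF fi])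
      show "f M \<theta> \<le> f (Suc M) \<theta>" for M \<theta> unfolding f_def by simp
      show "(\<lambda>M. f M \<theta>) \<longlonglongrightarrow> gg \<theta>" for \<theta>
        using pw[OF cb[of \<theta>]] unfolding f_def gg_def sums_def .
      show "bounded (range (\<lambda>M. integral {0..2*pi} (f M)))"
        unfolding bounded_iff using intfS intf0 by (intro exI[of _ "2*pi*S"]) auto
    qed
    have "integral {0..2*pi} gg \<le> 2*pi * S"
      using MCT intfS by (intro LIMSEQ_le_const2[of "\<lambda>M. integral {0..2*pi} (f M)"]) auto
    moreover have "integral {0..2*pi} (\<lambda>\<theta>. 1 / (1 - (cmod (\<phi> (c \<theta>)))\<^sup>2) ^ (2*n+1)) \<le> integral {0..2*pi} gg"
    proof (rule integral_le)
      show "(\<lambda>\<theta>. 1 / (1 - (cmod (\<phi> (c \<theta>)))\<^sup>2) ^ (2*n+1)) integrable_on {0..2*pi}"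
        unfolding c_def by (rule integrable_continuous_real[OF g_cont[OF phi r]])
      show "gg integrable_on {0..2*pi}" using MCT by blast
      fix \<theta> :: real
      have "\<phi> (c \<theta>) \<in> ball 0 1" using phi(2) cb by blast
      then have "0 \<le> (cmod (\<phi> (c \<theta>)))\<^sup>2" "(cmod (\<phi> (c \<theta>)))\<^sup>2 < 1" by (auto simp: abs_square_less_1)
      from g_le_GG[OF this, of n]
      show "1 / (1 - (cmod (\<phi> (c \<theta>)))\<^sup>2) ^ (2*n+1) \<le> gg \<theta>" unfolding gg_def .
    qed
    ultimately have A: "integral {0..2*pi} (\<lambda>\<theta>. 1 / (1 - (cmod (\<phi> (c \<theta>)))\<^sup>2) ^ (2*n+1)) \<le> 2*pi*S"
      by linarith
    have "(1/(2*pi)) * integral {0..2*pi} (\<lambda>\<theta>. 1 / (1 - (cmod (\<phi> (c \<theta>)))\<^sup>2) ^ (2*n+1)) \<le> (1/(2*pi)) * (2*pi*S)"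
      by (rule mult_left_mono[OF A]) simp
    then show ?thesis unfolding G_def c_def by simp
  qed
  define I where "I = {0<..<(1::real)}"
  have "(G \<longlongrightarrow> Sup (G ` ({..<1} \<inter> I))) (at 1 within ({..<1} \<inter> I))"
  proof (rule Lim_left_bound)
    fix a b assume "a \<in> I" "b \<in> I" "b < 1" "a \<le> b"
    then show "G a \<le> G b" unfolding G_def I_def by (intro Gm_mono[OF phi]) auto
  next
    fix b assume "b \<in> I" "b < 1"
    then show "G b \<le> S" using Gle unfolding I_def by auto
  qed
  then have "(G \<longlongrightarrow> Sup (G ` ({..<1} \<inter> I))) (at 1 within {..<1})"
  proof (rule Lim_transform_within_set)
    have "eventually (\<lambda>x. x \<in> ball (1::real) 1) (at 1)"
      by (rule eventually_at_in_open') auto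
    then show "eventually (\<lambda>x. x \<in> {..<1} \<inter> I \<longleftrightarrow> x \<in> {..<(1::real)}) (at 1)"
      unfolding eventually_at_filter I_def by eventually_elim (auto simp: dist_real_def)
  qed
  then show ?thesis unfolding G_def by blast
qed

theorem theorem3p3:
  fixes \<phi> :: "complex \<Rightarrow> complex" and n :: nat
  assumes "\<phi> holomorphic_on ball 0 1" and "\<phi> ` ball 0 1 \<subseteq> ball 0 1"
    and "n > 0"
    and "H2_bounded_op (D_op \<phi> n)"
  shows "H2_Hilbert_Schmidt (D_op \<phi> n) \<longleftrightarrow>
    (\<exists>L. ((\<lambda>r. (1 / (2*pi)) * integral {0..2*pi}
        (\<lambda>\<theta>. 1 / (1 - (cmod (\<phi> (complex_of_real r * exp (\<i> * complex_of_real \<theta>))))\<^sup>2) ^ (2*n+1)))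
      \<longlongrightarrow> L) (at_left 1))"
proof
  assume "H2_Hilbert_Schmidt (D_op \<phi> n)"
  then show "\<exists>L. ((\<lambda>r. (1 / (2*pi)) * integral {0..2*pi}
        (\<lambda>\<theta>. 1 / (1 - (cmod (\<phi> (complex_of_real r * exp (\<i> * complex_of_real \<theta>))))\<^sup>2) ^ (2*n+1)))
      \<longlongrightarrow> L) (at_left 1)"
    by (rule HS_only_if[OF assms(1,2)])
next
  assume "\<exists>L. ((\<lambda>r. (1 / (2*pi)) * integral {0..2*pi}
        (\<lambda>\<theta>. 1 / (1 - (cmod (\<phi> (complex_of_real r * exp (\<i> * complex_of_real \<theta>))))\<^sup>2) ^ (2*n+1)))
      \<longlongrightarrow> L) (at_left 1)"
  then obtain L where L: "((\<lambda>r. (1 / (2*pi)) * integral {0..2*pi}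
        (\<lambda>\<theta>. 1 / (1 - (cmod (\<phi> (complex_of_real r * exp (\<i> * complex_of_real \<theta>))))\<^sup>2) ^ (2*n+1)))
      \<longlongrightarrow> L) (at_left 1)" by blast
  show "H2_Hilbert_Schmidt (D_op \<phi> n)" by (rule HS_if[OF assms(1,2,4) L])
qed

end
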